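(* Let $d\ge2$, $T\ge2$, $\eta>0$. Consider the Bandit-PCA Online Mirror Descent algorithm run either with sparse sampling and any $\gamma\in[0,1]$, or with dense sampling and $\gamma=0$, against an adaptive environment with symmetric loss matrices of spectral norm at most $1$. Assume that almost surely, for every $t$, the matrix $\boldsymbol{W}_t^{-1}+\eta\widetilde{\boldsymbol{L}}_t$ is positive definite (so that $\widetilde{\boldsymbol{W}}_{t+1}=(\boldsymbol{W}_t^{-1}+\eta\widetilde{\boldsymbol{L}}_t)^{-1}$ and $\boldsymbol{W}_{t+1}$ are well-defined positive definite matrices). Then \[ \mathrm{regret}_T\le\frac{d\log T}{\eta}+2\gamma T+2+(1-\gamma)\sum_{t=1}^T\mathbb{E}\big[\langle\boldsymbol{W}_t-\widetilde{\boldsymbol{W}}_{t+1},\widetilde{\boldsymbol{L}}_t\rangle\big]. \]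
   Context: Notation: $\langle \boldsymbol{A},\boldsymbol{B}\rangle=\mathrm{tr}(\boldsymbol{A}^\top \boldsymbol{B})$; a density matrix is a symmetric positive semidefinite $d\times d$ matrix of trace $1$; $\mathcal{W}$ is the set of density matrices. Protocol: in rounds $t=1,\dots,T$ the learner picks a (possibly random) unit vector $\boldsymbol{w}_t\in\mathbb{R}^d$; the environment picks a symmetric $\boldsymbol{L}_t$ with spectral norm $\le1$, possibly depending on the past but not on $\boldsymbol{w}_t$; the learner observes only $\ell_t=\boldsymbol{w}_t^\top\boldsymbol{L}_t\boldsymbol{w}_t$. Regret: $\mathrm{regret}_T=\max_{\|\boldsymbol{u}\|=1}\sum_{t=1}^T\mathbb{E}[\langle\boldsymbol{w}_t\boldsymbol{w}_t^\top-\boldsymbol{u}\boldsymbol{u}^\top,\boldsymbol{L}_t\rangle]$. Algorithm (parameters $\eta>0$, $\gamma\in[0,1]$): $\boldsymbol{W}_1=\boldsymbol{I}/d$. In round $t$, eigendecompose $\boldsymbol{W}_t=\sum_i\mu_i\boldsymbol{u}_i\boldsymbol{u}_i^\top$ and set $\lambda_i=(1-\gamma)\mu_i+\gamma/d$; draw $\boldsymbol{w}_t$ and form $\widetilde{\boldsymbol{L}}_t$ by a sampling procedure; set $\widetilde{\boldsymbol{W}}_{t+1}=(\boldsymbol{W}_t^{-1}+\eta\widetilde{\boldsymbol{L}}_t)^{-1}$ and $\boldsymbol{W}_{t+1}=\arg\min_{\boldsymbol{W}\in\mathcal{W}}D(\boldsymbol{W}\|\widetilde{\boldsymbol{W}}_{t+1})$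 with $D(\boldsymbol{W}\|\boldsymbol{U})=\mathrm{tr}(\boldsymbol{U}^{-1}\boldsymbol{W})-\log\det(\boldsymbol{U}^{-1}\boldsymbol{W})-d$. Dense sampling (with $\gamma=0$): draw $B\sim\mathrm{Bernoulli}(1/2)$. If $B=1$, draw $I$ with $\Pr(I=i)=\lambda_i$, $\boldsymbol{w}_t=\boldsymbol{u}_I$, $\widetilde{\boldsymbol{L}}_t=2\ell_t\boldsymbol{W}_t^{-1/2}\boldsymbol{w}_t\boldsymbol{w}_t^\top\boldsymbol{W}_t^{-1/2}$. If $B=0$, draw i.i.d. uniform signs $\boldsymbol{s}\in\{-1,1\}^d$, $\boldsymbol{w}_t=\sum_is_i\sqrt{\lambda_i}\boldsymbol{u}_i$, $\widetilde{\boldsymbol{L}}_t=\ell_t(\boldsymbol{W}_t^{-1}\boldsymbol{w}_t\boldsymbol{w}_t^\top\boldsymbol{W}_t^{-1}-\boldsymbol{W}_t^{-1})$. Sparse sampling: draw $I,J$ independently with $\Pr(I=i)=\Pr(J=i)=\lambda_i$. If $I=J$: $\boldsymbol{w}_t=\boldsymbol{u}_I$, $\widetilde{\boldsymbol{L}}_t=(\ell_t/\lambda_I^2)\boldsymbol{u}_I\boldsymbol{u}_I^\top$. If $I\ne J$: draw a uniform sign $s\in\{-1,1\}$, $\boldsymbol{w}_t=(\boldsymbol{u}_I+s\boldsymbol{u}_J)/\sqrt2$, $\widetilde{\boldsymbol{L}}_t=\frac{s\ell_t}{2\lambda_I\lambda_J}(\boldsymbol{u}_I\boldsymbol{u}_J^\top+\boldsymbol{u}_J\boldsymbol{u}_I^\top)$.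 *)

theory Defs
  imports "HOL-Analysis.Analysis" "HOL-Probability.Probability"
begin

type_synonym 'n rvec = "real^'n"
type_synonym 'n rmat = "real^'n^'n"

definition outer :: "'n::finite rvec \<Rightarrow> 'n rvec \<Rightarrow> 'n rmat" where
  "outer u v = (\<chi> i j. u$i * v$j)"

definition frob :: "'n::finite rmat \<Rightarrow> 'n rmat \<Rightarrow> real" where
  "frob A B = trace (transpose A ** B)"

definition symmetric_mat :: "'n::finite rmat \<Rightarrow> bool" where
  "symmetric_mat A \<longleftrightarrow> transpose A = A"

definition posdef :: "'n::finite rmat \<Rightarrow> bool" where
  "posdef A \<longleftrightarrow> symmetric_mat A \<and> (\<forall>x. x \<noteq> 0 \<longrightarrow> x \<bullet> (A *v x) > 0)"

definition psd :: "'n::finite rmat \<Rightarrow> bool" where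
  "psd A \<longleftrightarrow> symmetric_mat A \<and> (\<forall>x. x \<bullet> (A *v x) \<ge> 0)"

definition density :: "'n::finite rmat \<Rightarrow> bool" where
  "density A \<longleftrightarrow> psd A \<and> trace A = 1"

definition spec_norm :: "'n::finite rmat \<Rightarrow> real" where
  "spec_norm A = onorm (\<lambda>x. A *v x)"

text \<open>An eigendecomposition oracle: returns eigenvalues mu and orthonormal eigenvectors u
  with A = sum_i mu_i u_i u_i^T (for symmetric A).  The algorithm may use any such choice.\<close>
type_synonym 'n eigfun = "'n rmat \<Rightarrow> ('n \<Rightarrow> real) \<times> ('n \<Rightarrow> 'n rvec)"

definition valid_eig :: "'n::finite eigfun \<Rightarrow> bool" where
  "valid_eig eig \<longleftrightarrow> (\<forall>A. symmetric_mat A \<longrightarrow>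
     (\<forall>i j. snd (eig A) i \<bullet> snd (eig A) j = (if i = j then 1 else 0)) \<and>
     A = (\<Sum>i\<in>UNIV. fst (eig A) i *\<^sub>R outer (snd (eig A) i) (snd (eig A) i)))"

definition logdet_div :: "'n::finite rmat \<Rightarrow> 'n rmat \<Rightarrow> real" where
  "logdet_div W U = trace (matrix_inv U ** W) - ln (det (matrix_inv U ** W)) - real CARD('n)"

text \<open>Projection onto density matrices w.r.t. D.  D(W||U) = +infinity for singular W,
  so the minimisation is over positive definite density matrices.\<close>
definition proj :: "'n::finite rmat \<Rightarrow> 'n rmat" where
  "proj U = (SOME W. density W \<and> posdef W \<and>
      (\<forall>V. density V \<and> posdef V \<longrightarrow> logdet_div W U \<le> logdet_div V U))"

definition W1 :: "'n::finite rmat" where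
  "W1 = (1 / real CARD('n)) *\<^sub>R mat 1"

definition Wtil :: "real \<Rightarrow> 'n::finite rmat \<Rightarrow> 'n rmat \<Rightarrow> 'n rmat" where
  "Wtil \<eta> W Lt = matrix_inv (matrix_inv W + \<eta> *\<^sub>R Lt)"

text \<open>History: list of rounds (L_t, w_t, Ltilde_t).\<close>
type_synonym 'n hist = "('n rmat \<times> 'n rvec \<times> 'n rmat) list"

fun Wfrom :: "real \<Rightarrow> 'n::finite rmat \<Rightarrow> 'n hist \<Rightarrow> 'n rmat" where
  "Wfrom \<eta> W [] = W"
| "Wfrom \<eta> W ((L, w, Lt) # h) = Wfrom \<eta> (proj (Wtil \<eta> W Lt)) h"

text \<open>W_t (t counted from 0, so Wt eta h 0 = W_1) for history h.\<close>
definition Wt :: "real \<Rightarrow> 'n::finite hist \<Rightarrow> nat \<Rightarrow> 'n rmat" where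
  "Wt \<eta> h t = Wfrom \<eta> W1 (take t h)"

datatype sampling = Sparse | Dense

definition sgn_of :: "bool \<Rightarrow> real" where
  "sgn_of b = (if b then 1 else -1)"

definition inv_sqrt :: "'n::finite eigfun \<Rightarrow> 'n rmat \<Rightarrow> 'n rmat" where
  "inv_sqrt eig W = (\<Sum>i\<in>UNIV. (1 / sqrt (fst (eig W) i)) *\<^sub>R outer (snd (eig W) i) (snd (eig W) i))"

text \<open>One round of sampling: given the current iterate W and the (hidden) loss L,
  returns the distribution of (w_t, Ltilde_t); the estimate uses only ell_t = w^T L w.\<close>
definition samp :: "sampling \<Rightarrow> real \<Rightarrow> 'n::finite eigfun \<Rightarrow> 'n rmat \<Rightarrow> 'n rmat
                     \<Rightarrow> ('n rvec \<times> 'n rmat) pmf" where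
  "samp mode \<gamma> eig W L =
    (let \<mu> = fst (eig W); u = snd (eig W);
         lam = (\<lambda>i. (1 - \<gamma>) * \<mu> i + \<gamma> / real CARD('n));
         ell = (\<lambda>w. w \<bullet> (L *v w));
         Pl = embed_pmf lam;
         Wi = matrix_inv W
     in case mode of
       Sparse \<Rightarrow>
         bind_pmf Pl (\<lambda>I. bind_pmf Pl (\<lambda>J. bind_pmf (pmf_of_set (UNIV :: bool set)) (\<lambda>s.
           return_pmf
             (if I = J then (u I, (ell (u I) / (lam I)^2) *\<^sub>R outer (u I) (u I))
              else (let w = (1 / sqrt 2) *\<^sub>R (u I + sgn_of s *\<^sub>R u J)
                    in (w, (sgn_of s * ell w / (2 * lam I * lam J)) *\<^sub>R
                             (outer (u I) (u J) + outer (u J) (u I))))))))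
     | Dense \<Rightarrow>
         bind_pmf (bernoulli_pmf (1/2)) (\<lambda>B.
           if B then
             bind_pmf Pl (\<lambda>I. return_pmf
               (u I, (2 * ell (u I)) *\<^sub>R (inv_sqrt eig W ** outer (u I) (u I) ** inv_sqrt eig W)))
           else
             bind_pmf (pmf_of_set (UNIV :: ('n \<Rightarrow> bool) set)) (\<lambda>s.
               (let w = (\<Sum>i\<in>UNIV. (sgn_of (s i) * sqrt (lam i)) *\<^sub>R u i)
                in return_pmf (w, ell w *\<^sub>R (Wi ** outer w w ** Wi - Wi))))))"

text \<open>Distribution of the history after k rounds; env is the adaptive environment,
  choosing L_t as a function of the past (all previous losses, plays and estimates).\<close>
fun traj :: "sampling \<Rightarrow> real \<Rightarrow> real \<Rightarrow> 'n::finite eigfun \<Rightarrow> ('n hist \<Rightarrow> 'n rmat)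
               \<Rightarrow> nat \<Rightarrow> 'n hist pmf" where
  "traj mode \<gamma> \<eta> eig env 0 = return_pmf []"
| "traj mode \<gamma> \<eta> eig env (Suc k) =
     bind_pmf (traj mode \<gamma> \<eta> eig env k) (\<lambda>h.
       map_pmf (\<lambda>(w, Lt). h @ [(env h, w, Lt)])
         (samp mode \<gamma> eig (Wfrom \<eta> W1 h) (env h)))"

definition Lh :: "'n::finite hist \<Rightarrow> nat \<Rightarrow> 'n rmat" where "Lh h t = fst (h ! t)"
definition wh :: "'n::finite hist \<Rightarrow> nat \<Rightarrow> 'n rvec" where "wh h t = fst (snd (h ! t))"
definition Lth :: "'n::finite hist \<Rightarrow> nat \<Rightarrow> 'n rmat" where "Lth h t = snd (snd (h ! t))"

definition regret :: "sampling \<Rightarrow> real \<Rightarrow> real \<Rightarrow> 'n::finite eigfun \<Rightarrow> ('n hist \<Rightarrow> 'n rmat)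
                       \<Rightarrow> nat \<Rightarrow> real" where
  "regret mode \<gamma> \<eta> eig env T =
     (SUP u\<in>{u::'n rvec. norm u = 1}. \<Sum>t<T.
        measure_pmf.expectation (traj mode \<gamma> \<eta> eig env T)
          (\<lambda>h. frob (outer (wh h t) (wh h t) - outer u u) (Lh h t)))"

end

theory Submission
  imports Defs
begin

lemma outer_nth[simp]: "outer u v $ i $ j = u$i * v$j"
  by (simp add: outer_def)

lemma outer_mv: "outer a b *v x = (b \<bullet> x) *\<^sub>R a"
  by (simp add: vec_eq_iff matrix_vector_mult_def inner_vec_def sum_distrib_left sum_distrib_right mult_ac)

lemma outer_mm: "outer a b ** outer c d = (b \<bullet> c) *\<^sub>R outer a d"
  by (simp add: vec_eq_iff matrix_matrix_mult_def inner_vec_def sum_distrib_left sum_distrib_right mult_ac)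

lemma mm_outer_left: "A ** outer a b = outer (A *v a) b"
  by (simp add: vec_eq_iff matrix_matrix_mult_def matrix_vector_mult_def sum_distrib_right mult.assoc)

lemma mm_outer_right: "outer a b ** A = outer a (transpose A *v b)"
  by (simp add: vec_eq_iff matrix_matrix_mult_def matrix_vector_mult_def transpose_def sum_distrib_left mult_ac)

lemma transpose_outer: "transpose (outer a b) = outer b a"
  by (simp add: vec_eq_iff transpose_def)

lemma trace_outer: "trace (outer a b) = a \<bullet> b"
  by (simp add: trace_def inner_vec_def)

lemma frob_alt: "frob A B = (\<Sum>i\<in>UNIV. \<Sum>j\<in>UNIV. A$i$j * B$i$j)"
  unfolding frob_def trace_def matrix_matrix_mult_def transpose_def
  by simp (rule sum.swap)

lemma frob_outer_right: "frob A (outer x y) = x \<bullet> (A *v y)"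
  unfolding frob_alt by (simp add: inner_vec_def matrix_vector_mult_def sum_distrib_left sum_distrib_right mult_ac)

lemma frob_outer_left: "frob (outer x y) A = x \<bullet> (A *v y)"
  unfolding frob_alt by (simp add: inner_vec_def matrix_vector_mult_def sum_distrib_left sum_distrib_right mult_ac)

lemma frob_sym: "frob A B = frob B A"
  unfolding frob_alt by (simp add: mult.commute)

lemma frob_add_left: "frob (A + B) C = frob A C + frob B C"
  unfolding frob_alt by (simp add: algebra_simps sum.distrib)
lemma frob_diff_left: "frob (A - B) C = frob A C - frob B C"
  unfolding frob_alt by (simp add: algebra_simps sum_subtractf)
lemma frob_scale_left: "frob (c *\<^sub>R A) C = c * frob A C"
  unfolding frob_alt by (simp add: algebra_simps sum_distrib_left)
lemma frob_sum_left: "finite S \<Longrightarrow> frob (\<Sum>k\<in>S. f k) C = (\<Sum>k\<in>S. frob (f k) C)"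
  by (induction S rule: finite_induct) (simp_all add: frob_add_left, simp add: frob_alt)
lemma frob_add_right: "frob C (A + B) = frob C A + frob C B"
  by (subst (1 2 3) frob_sym) (rule frob_add_left)
lemma frob_diff_right: "frob C (A - B) = frob C A - frob C B"
  by (subst (1 2 3) frob_sym) (rule frob_diff_left)
lemma frob_scale_right: "frob C (c *\<^sub>R A) = c * frob C A"
  by (subst (1 2) frob_sym) (rule frob_scale_left)
lemma frob_sum_right: "finite S \<Longrightarrow> frob C (\<Sum>k\<in>S. f k) = (\<Sum>k\<in>S. frob C (f k))"
  by (induction S rule: finite_induct) (simp_all add: frob_add_right, simp add: frob_alt)

lemma frob_trace: "frob A B = trace (transpose A ** B)" by (simp add: frob_def)

lemma mm_sum_left: "(\<Sum>k\<in>S. f k) ** (B::real^'n^'n) = (\<Sum>k\<in>S. f k ** B)"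
  by (cases "finite S"; simp add: vec_eq_iff matrix_matrix_mult_def sum_component sum_distrib_right)
    (subst sum.swap, simp)

lemma mm_sum_right: "(B::real^'n^'n) ** (\<Sum>k\<in>S. f k) = (\<Sum>k\<in>S. B ** f k)"
  by (cases "finite S"; simp add: vec_eq_iff matrix_matrix_mult_def sum_component sum_distrib_left)
    (subst sum.swap, simp)

lemma mv_sum_left: "(\<Sum>k\<in>S. f k) *v (x::real^'n) = (\<Sum>k\<in>S. f k *v x)"
  by (cases "finite S"; simp add: vec_eq_iff matrix_vector_mult_def sum_component sum_distrib_right)
    (subst sum.swap, simp)

lemma mv_sum_right: "(A::real^'n^'n) *v (\<Sum>k\<in>S. f k) = (\<Sum>k\<in>S. A *v f k)"
  by (cases "finite S"; simp add: vec_eq_iff matrix_vector_mult_def sum_component sum_distrib_left)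
    (subst sum.swap, simp)

lemma mv_scale_left: "(c *\<^sub>R A) *v (x::real^'n) = c *\<^sub>R (A *v x)"
  by (simp add: vec_eq_iff matrix_vector_mult_def sum_distrib_left mult_ac)
lemma mv_scale_right: "(A::real^'n^'n) *v (c *\<^sub>R x) = c *\<^sub>R (A *v x)"
  by (simp add: vec_eq_iff matrix_vector_mult_def sum_distrib_left mult_ac)

lemma transpose_sum: "transpose (\<Sum>k\<in>S. f k) = (\<Sum>k\<in>S. transpose (f k :: real^'n^'n))"
  by (cases "finite S"; simp add: vec_eq_iff transpose_def sum_component)

lemma trace_sum: "trace (\<Sum>k\<in>S. f k) = (\<Sum>k\<in>S. trace (f k :: real^'n^'n))"
  by (cases "finite S"; simp add: trace_def sum_component) (subst sum.swap, simp)

lemma trace_scale: "trace (c *\<^sub>R (A::real^'n^'n)) = c * trace A"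
  by (simp add: trace_def sum_distrib_left)

lemma inner_mv_transpose: "x \<bullet> ((A::real^'n^'n) *v y) = (transpose A *v x) \<bullet> y"
  by (simp add: inner_vec_def matrix_vector_mult_def transpose_def sum_distrib_left sum_distrib_right mult_ac)
     (subst sum.swap, simp)


definition ortho :: "('n::finite \<Rightarrow> real^'n) \<Rightarrow> bool" where
  "ortho u \<longleftrightarrow> (\<forall>i j. u i \<bullet> u j = (if i = j then 1 else 0))"

definition spec :: "('n::finite \<Rightarrow> real) \<Rightarrow> ('n \<Rightarrow> real^'n) \<Rightarrow> real^'n^'n" where
  "spec f u = (\<Sum>i\<in>UNIV. f i *\<^sub>R outer (u i) (u i))"

lemma ortho_complete:
  assumes "ortho u" shows "(\<Sum>i\<in>UNIV. outer (u i) (u i)) = mat 1"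
proof -
  define Q where "Q = (\<chi> a b. u b $ a)"
  have "transpose Q ** Q = mat 1"
    using assms by (simp add: vec_eq_iff matrix_matrix_mult_def transpose_def Q_def mat_def ortho_def inner_vec_def)
  hence "Q ** transpose Q = mat 1" by (simp add: matrix_left_right_inverse)
  thus ?thesis
    by (simp add: vec_eq_iff matrix_matrix_mult_def transpose_def Q_def sum_component)
qed

lemma ortho_expand:
  assumes "ortho u" shows "x = (\<Sum>i\<in>UNIV. (u i \<bullet> x) *\<^sub>R u i)"
proof -
  have "x = mat 1 *v x" by simp
  also have "\<dots> = (\<Sum>i\<in>UNIV. outer (u i) (u i)) *v x" using ortho_complete[OF assms] by simp
  also have "\<dots> = (\<Sum>i\<in>UNIV. (u i \<bullet> x) *\<^sub>R u i)" by (simp add: mv_sum_left outer_mv)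
  finally show ?thesis .
qed

lemma spec_mv: assumes "ortho u" shows "spec f u *v u k = f k *\<^sub>R u k"
proof -
  have "spec f u *v u k = (\<Sum>i\<in>UNIV. (f i * (u i \<bullet> u k)) *\<^sub>R u i)"
    by (simp add: spec_def mv_sum_left mv_scale_left outer_mv)
  also have "\<dots> = (\<Sum>i\<in>UNIV. (if i = k then f k *\<^sub>R u k else 0))"
    using assms by (intro sum.cong) (auto simp: ortho_def)
  finally show ?thesis by simp
qed

lemma spec_inner: assumes "ortho u" shows "u i \<bullet> (spec f u *v u j) = (if i = j then f j else 0)"
  using assms by (simp add: spec_mv ortho_def)

lemma outer_scale_right: "outer a (c *\<^sub>R b) = c *\<^sub>R outer a b"
  by (simp add: vec_eq_iff)

lemma spec_transpose: "transpose (spec f u) = spec f u"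
  by (simp add: spec_def transpose_sum transpose_outer transpose_scalar)

lemma spec_mm: assumes "ortho u" shows "spec f u ** spec g u = spec (\<lambda>i. f i * g i) u"
proof -
  have "spec f u ** spec g u = (\<Sum>i\<in>UNIV. f i *\<^sub>R (outer (u i) (u i) ** spec g u))"
    by (simp add: spec_def mm_sum_left scalar_matrix_assoc)
  also have "\<dots> = (\<Sum>i\<in>UNIV. f i *\<^sub>R (g i *\<^sub>R outer (u i) (u i)))"
    by (simp add: mm_outer_right spec_transpose spec_mv[OF assms] outer_scale_right)
  finally show ?thesis by (simp add: spec_def)
qed

lemma spec_one: "ortho u \<Longrightarrow> spec (\<lambda>_. 1) u = mat 1"
  by (simp add: spec_def ortho_complete)

lemma spec_add: "spec f u + spec g u = spec (\<lambda>i. f i + g i) u"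
  by (simp add: spec_def sum.distrib[symmetric] scaleR_add_left)

lemma spec_diff: "spec f u - spec g u = spec (\<lambda>i. f i - g i) u"
  by (simp add: spec_def sum_subtractf[symmetric] scaleR_diff_left)

lemma spec_scale: "c *\<^sub>R spec f u = spec (\<lambda>i. c * f i) u"
  by (simp add: spec_def scaleR_sum_right)

lemma spec_sym: "symmetric_mat (spec f u)"
  by (simp add: symmetric_mat_def spec_transpose)

lemma sum_sq_ortho: assumes "ortho u" shows "(\<Sum>i\<in>UNIV. (u i \<bullet> x)^2) = x \<bullet> x"
proof -
  have "x \<bullet> x = x \<bullet> (\<Sum>i\<in>UNIV. (u i \<bullet> x) *\<^sub>R u i)" using ortho_expand[OF assms, of x] by simp
  also have "\<dots> = (\<Sum>i\<in>UNIV. (u i \<bullet> x)^2)" by (simp add: inner_sum_right power2_eq_square inner_commute)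
  finally show ?thesis by simp
qed

lemma spec_quad: "x \<bullet> (spec f u *v x) = (\<Sum>i\<in>UNIV. f i * (u i \<bullet> x)^2)"
  by (simp add: spec_def mv_sum_left mv_scale_left outer_mv inner_sum_right power2_eq_square inner_commute mult_ac)

lemma trace_spec: "ortho u \<Longrightarrow> trace (spec f u) = (\<Sum>i\<in>UNIV. f i)"
  by (simp add: spec_def trace_sum trace_scale trace_outer ortho_def)

lemma det_spec: assumes "ortho u" shows "det (spec f u) = (\<Prod>i\<in>UNIV. f i)"
proof -
  define Q where "Q = (\<chi> a b. u b $ a)"
  define D where "D = (\<chi> a b. if a = b then f a else 0)"
  have QQ: "transpose Q ** Q = mat 1"
    using assms by (simp add: vec_eq_iff matrix_matrix_mult_def transpose_def Q_def mat_def ortho_def inner_vec_def)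
  have "spec f u = Q ** D ** transpose Q"
  proof -
    have "\<And>a b. (Q ** D ** transpose Q) $ a $ b = (\<Sum>k\<in>UNIV. u k $ a * f k * u k $ b)"
      by (simp add: matrix_matrix_mult_def Q_def D_def transpose_def sum_distrib_right if_distrib
          if_distribR cong: if_cong)
    thus ?thesis by (simp add: vec_eq_iff spec_def sum_component mult_ac)
  qed
  hence "det (spec f u) = det Q * det D * det Q" by (simp add: det_mul)
  also have "det Q * det Q = 1"
    using QQ det_mul[of "transpose Q" Q] by simp
  hence "det Q * det D * det Q = det D" by (metis mult.commute mult.left_neutral mult.assoc)
  also have "det D = (\<Prod>i\<in>UNIV. f i)" by (subst det_diagonal) (auto simp: D_def)
  finally show ?thesis .
qed

lemma trace_ortho: assumes "ortho u" shows "trace M = (\<Sum>i\<in>UNIV. u i \<bullet> (M *v u i))"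
proof -
  have "trace M = trace (M ** (\<Sum>i\<in>UNIV. outer (u i) (u i)))" using ortho_complete[OF assms] by simp
  also have "\<dots> = (\<Sum>i\<in>UNIV. (M *v u i) \<bullet> u i)" by (simp add: mm_sum_right trace_sum mm_outer_left trace_outer)
  finally show ?thesis by (simp add: inner_commute)
qed

lemma inner_tmv: "x \<bullet> (transpose A *v y) = ((A::real^'n^'n) *v x) \<bullet> y"
  using inner_mv_transpose[of x "transpose A" y] by simp

lemma frob_ortho: assumes "ortho u"
  shows "frob A B = (\<Sum>i\<in>UNIV. \<Sum>j\<in>UNIV. (u i \<bullet> (A *v u j)) * (u i \<bullet> (B *v u j)))"
proof -
  have "frob A B = (\<Sum>j\<in>UNIV. u j \<bullet> ((transpose A ** B) *v u j))"
    by (simp add: frob_def trace_ortho[OF assms])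
  also have "\<dots> = (\<Sum>j\<in>UNIV. (A *v u j) \<bullet> (B *v u j))"
    by (simp only: matrix_vector_mul_assoc[symmetric] inner_tmv)
  also have "\<dots> = (\<Sum>j\<in>UNIV. \<Sum>i\<in>UNIV. (u i \<bullet> (A *v u j)) * (u i \<bullet> (B *v u j)))"
  proof (rule sum.cong[OF refl])
    fix j
    have "(A *v u j) \<bullet> (B *v u j) = (\<Sum>i\<in>UNIV. (u i \<bullet> (A *v u j)) *\<^sub>R u i) \<bullet> (B *v u j)"
      using ortho_expand[OF assms, of "A *v u j"] by simp
    thus "(A *v u j) \<bullet> (B *v u j) = (\<Sum>i\<in>UNIV. (u i \<bullet> (A *v u j)) * (u i \<bullet> (B *v u j)))"
      by (simp add: inner_sum_left)
  qed
  finally show ?thesis by (simp add: sum.swap[of _ UNIV UNIV, where g="\<lambda>i j. (u i \<bullet> (A *v u j)) * (u i \<bullet> (B *v u j))"])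
qed

lemma eig_ortho: "valid_eig eig \<Longrightarrow> symmetric_mat A \<Longrightarrow> ortho (snd (eig A))"
  by (simp add: valid_eig_def ortho_def)

lemma eig_spec: "valid_eig eig \<Longrightarrow> symmetric_mat A \<Longrightarrow> A = spec (fst (eig A)) (snd (eig A))"
  by (simp add: valid_eig_def spec_def)


lemma inv_unique:
  fixes A B :: "real^'n::finite^'n"
  assumes "A ** B = mat 1" shows "matrix_inv A = B"
proof -
  have BA: "B ** A = mat 1" using assms matrix_left_right_inverse by blast
  have ex: "\<exists>X. A ** X = mat 1 \<and> X ** A = mat 1" using assms BA by blast
  define X where "X = matrix_inv A"
  have X: "A ** X = mat 1 \<and> X ** A = mat 1"
    unfolding X_def matrix_inv_def using someI_ex[OF ex] .
  have "X = X ** (A ** B)" using assms by simp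
  also have "\<dots> = B" using X by (simp add: matrix_mul_assoc)
  finally show ?thesis unfolding X_def .
qed

lemma spec_inv: assumes "ortho u" "\<And>i. f i \<noteq> 0"
  shows "matrix_inv (spec f u) = spec (\<lambda>i. 1 / f i) u"
  by (rule inv_unique) (simp add: spec_mm assms spec_one)

lemma posdef_spec: assumes "ortho u" "\<And>i. f i > 0" shows "posdef (spec f u)"
  unfolding posdef_def
proof (intro conjI allI impI)
  show "symmetric_mat (spec f u)" by (rule spec_sym)
  fix x :: "real^'a" assume "x \<noteq> 0"
  have "(\<Sum>i\<in>UNIV. (u i \<bullet> x)^2) = x \<bullet> x" by (rule sum_sq_ortho[OF assms(1)])
  also have "\<dots> > 0" using \<open>x \<noteq> 0\<close> by simp
  finally obtain i where i: "(u i \<bullet> x)^2 \<noteq> 0"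
    by (metis (mono_tags, lifting) less_irrefl sum.neutral)
  have nn: "\<And>j. 0 \<le> f j * (u j \<bullet> x)^2" using assms(2) by (simp add: less_imp_le)
  have pi: "0 < f i * (u i \<bullet> x)^2" using i assms(2) by simp
  have "0 < (\<Sum>i\<in>UNIV. f i * (u i \<bullet> x)^2)"
    using sum_pos2[of UNIV i "\<lambda>j. f j * (u j \<bullet> x)^2"] pi nn by simp
  thus "0 < x \<bullet> (spec f u *v x)" by (simp add: spec_quad)
qed

lemma posdef_decomp:
  fixes eig :: "'n::finite eigfun"
  assumes "valid_eig eig" "posdef A"
  shows "ortho (snd (eig A)) \<and> (\<forall>i. fst (eig A) i > 0) \<and> A = spec (fst (eig A)) (snd (eig A))"
proof -
  have sym: "symmetric_mat A" using assms(2) by (simp add: posdef_def)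
  let ?u = "snd (eig A)" and ?m = "fst (eig A)"
  have o: "ortho ?u" by (rule eig_ortho[OF assms(1) sym])
  have A: "A = spec ?m ?u" by (rule eig_spec[OF assms(1) sym])
  have "\<forall>i. ?m i > 0"
  proof
    fix i
    have "?u i \<bullet> ?u i = 1" using o by (simp add: ortho_def)
    hence "?u i \<noteq> 0" by auto
    hence "?u i \<bullet> (A *v ?u i) > 0" using assms(2) by (simp add: posdef_def)
    also have "?u i \<bullet> (A *v ?u i) = ?m i" by (subst A) (simp add: spec_inner[OF o])
    finally show "?m i > 0" .
  qed
  thus ?thesis using o A by blast
qed

lemma posdef_ex:
  fixes eig :: "'n::finite eigfun" and A :: "real^'n^'n"
  assumes "valid_eig eig" "posdef A"
  obtains m u where "ortho u" "\<And>i. m i > 0" "A = spec m u"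
  using posdef_decomp[OF assms] by blast

lemma posdef_inv:
  fixes eig :: "'n::finite eigfun" and A :: "real^'n^'n"
  assumes "valid_eig eig" "posdef A" shows "posdef (matrix_inv A)"
proof -
  obtain m u where o: "ortho u" and m: "\<And>i. m i > 0" and A: "A = spec m u" using posdef_ex[OF assms] by blast
  have "m i \<noteq> 0" for i using m[of i] by simp
  thus ?thesis using o m A by (simp add: spec_inv posdef_spec)
qed

lemma inv_inv:
  fixes eig :: "'n::finite eigfun" and A :: "real^'n^'n"
  assumes "valid_eig eig" "posdef A" shows "matrix_inv (matrix_inv A) = A"
proof -
  obtain m u where o: "ortho u" and m: "\<And>i. m i > 0" and A: "A = spec m u" using posdef_ex[OF assms] by blast
  have "m i \<noteq> 0" for i using m[of i] by simp
  thus ?thesis using o A by (simp add: spec_inv)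
qed

lemma inv_mul_r:
  fixes eig :: "'n::finite eigfun" and A :: "real^'n^'n"
  assumes "valid_eig eig" "posdef A" shows "A ** matrix_inv A = mat 1"
proof -
  obtain m u where o: "ortho u" and m: "\<And>i. m i > 0" and A: "A = spec m u" using posdef_ex[OF assms] by blast
  have "m i \<noteq> 0" for i using m[of i] by simp
  thus ?thesis using o A by (simp add: spec_inv spec_mm spec_one)
qed

lemma inv_mul_l:
  fixes eig :: "'n::finite eigfun" and A :: "real^'n^'n"
  assumes "valid_eig eig" "posdef A" shows "matrix_inv A ** A = mat 1"
  using inv_mul_r[OF assms] matrix_left_right_inverse by blast

lemma det_posdef:
  fixes eig :: "'n::finite eigfun" and A :: "real^'n^'n"
  assumes "valid_eig eig" "posdef A" shows "det A > 0"
proof -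
  obtain m u where o: "ortho u" and m: "\<And>i. m i > 0" and A: "A = spec m u" using posdef_ex[OF assms] by blast
  show ?thesis using o m A by (simp add: det_spec prod_pos less_imp_le)
qed

lemma det_inv:
  fixes eig :: "'n::finite eigfun" and A :: "real^'n^'n"
  assumes "valid_eig eig" "posdef A" shows "det (matrix_inv A) = 1 / det A"
proof -
  have "det A * det (matrix_inv A) = 1" using inv_mul_r[OF assms] det_mul[of A "matrix_inv A"] by simp
  thus ?thesis using det_posdef[OF assms] by (simp add: field_simps)
qed

lemma symm_posdef: "posdef A \<Longrightarrow> transpose A = A"
  by (simp add: posdef_def symmetric_mat_def)

lemma ln_strict: assumes "(x::real) > 0" "x \<noteq> 1" shows "ln x < x - 1"
proof -
  have s: "sqrt x > 0" using assms by simp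
  have "sqrt x \<noteq> 1" using assms by auto
  have "ln x = 2 * ln (sqrt x)" using assms by (simp add: ln_sqrt)
  also have "\<dots> \<le> 2 * (sqrt x - 1)" using ln_le_minus_one[OF s] by simp
  also have "\<dots> < x - 1"
  proof -
    have "0 < (sqrt x - 1)^2" using \<open>sqrt x \<noteq> 1\<close> by simp
    thus ?thesis using assms by (simp add: power2_eq_square algebra_simps)
  qed
  finally show ?thesis .
qed

lemma D_alt:
  fixes X Y :: "real^'n::finite^'n" and eig :: "'n eigfun"
  assumes "valid_eig eig" "posdef X" "posdef Y"
  shows "logdet_div X Y = trace (matrix_inv Y ** X) - ln (det X) + ln (det Y) - real CARD('n)"
proof -
  have dX: "det X > 0" and dY: "det Y > 0" using det_posdef assms by blast+
  have "det (matrix_inv Y ** X) = det X / det Y" by (simp add: det_mul det_inv[OF assms(1,3)])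
  hence "ln (det (matrix_inv Y ** X)) = ln (det X) - ln (det Y)" using dX dY by (simp add: ln_div)
  thus ?thesis by (simp add: logdet_div_def)
qed

lemma D_core:
  fixes eig :: "'n::finite eigfun"
  assumes ev: "valid_eig eig" and X: "posdef (X::real^'n::finite^'n)" and Y: "posdef Y"
  shows "logdet_div X Y \<ge> 0 \<and> (logdet_div X Y \<le> 0 \<longrightarrow> X = Y)"
proof -
  obtain m u where o: "ortho u" and m: "\<And>i. m i > 0" and Xs: "X = spec m u" using posdef_ex[OF ev X] by blast
  define Yi where "Yi = matrix_inv Y"
  have Yi: "posdef Yi" unfolding Yi_def by (rule posdef_inv[OF ev Y])
  define S where "S = spec (\<lambda>i. sqrt (m i)) u"
  define Si where "Si = spec (\<lambda>i. 1 / sqrt (m i)) u"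
  have SS: "S ** S = X" using m by (simp add: S_def Xs spec_mm[OF o] less_imp_le)
  have mi0: "\<And>i. m i \<noteq> 0" using m by (metis less_irrefl)
  have SiS: "Si ** S = mat 1" using m by (simp add: S_def Si_def spec_mm[OF o] spec_one[OF o] mi0)
  have SiSi: "Si ** Si = matrix_inv X"
  proof -
    have "\<And>i. m i \<noteq> 0" using m by (metis less_irrefl)
    thus ?thesis using m by (simp add: Si_def Xs spec_mm[OF o] spec_inv[OF o] less_imp_le)
  qed
  define M where "M = S ** Yi ** S"
  have tS: "transpose S = S" by (simp add: S_def spec_transpose)
  have tYi: "transpose Yi = Yi" by (rule symm_posdef[OF Yi])
  have Mpd: "posdef M"
    unfolding posdef_def symmetric_mat_def
  proof (intro conjI allI impI)
    show "transpose M = M" by (simp add: M_def matrix_transpose_mul tS tYi matrix_mul_assoc)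
    fix x :: "real^'n" assume "x \<noteq> 0"
    have "S *v x \<noteq> 0"
    proof
      assume "S *v x = 0"
      hence "Si *v (S *v x) = 0" by simp
      thus False using SiS \<open>x \<noteq> 0\<close> by (simp add: matrix_vector_mul_assoc)
    qed
    hence "0 < (S *v x) \<bullet> (Yi *v (S *v x))" using Yi by (simp add: posdef_def)
    also have "\<dots> = x \<bullet> (M *v x)"
      using inner_tmv[of x S "Yi *v (S *v x)"] by (simp add: tS M_def matrix_vector_mul_assoc matrix_mul_assoc)
    finally show "0 < x \<bullet> (M *v x)" .
  qed
  obtain k z where oz: "ortho z" and k: "\<And>i. k i > 0" and Ms: "M = spec k z" using posdef_ex[OF ev Mpd] by blast
  have k0: "\<And>i. k i \<noteq> 0" using k by (metis less_irrefl)
  have trM: "trace M = trace (Yi ** X)"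
  proof -
    have "trace M = trace (S ** (Yi ** S))" by (simp add: M_def matrix_mul_assoc)
    also have "\<dots> = trace ((Yi ** S) ** S)" by (rule trace_mul_sym)
    finally show ?thesis using SS by (metis matrix_mul_assoc)
  qed
  have dM: "det M = det (Yi ** X)"
    by (simp add: M_def det_mul SS[symmetric]) 
  have "logdet_div X Y = trace M - ln (det M) - real CARD('n)"
    by (simp add: logdet_div_def trM dM Yi_def)
  also have "\<dots> = (\<Sum>i\<in>UNIV. k i - ln (k i) - 1)"
    using k ln_prod[of UNIV k] k0 by (simp add: Ms trace_spec[OF oz] det_spec[OF oz] sum_subtractf less_imp_le)
  finally have D: "logdet_div X Y = (\<Sum>i\<in>UNIV. k i - ln (k i) - 1)" .
  have nn: "\<And>i. k i - ln (k i) - 1 \<ge> 0" using ln_le_minus_one k by (simp add: algebra_simps)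
  have snn: "0 \<le> (\<Sum>i\<in>UNIV. k i - ln (k i) - 1)" by (rule sum_nonneg) (rule nn)
  have "logdet_div X Y \<le> 0 \<longrightarrow> X = Y"
  proof
    assume "logdet_div X Y \<le> 0"
    hence "(\<Sum>i\<in>UNIV. k i - ln (k i) - 1) = 0" using D snn by linarith
    hence z0: "\<And>i. k i - ln (k i) - 1 = 0" using sum_nonneg_eq_0_iff[of UNIV "\<lambda>i. k i - ln (k i) - 1"] nn by simp
    have "\<And>i. k i = 1"
    proof (rule ccontr)
      fix i assume "k i \<noteq> 1"
      thus False using ln_strict[OF k[of i]] z0[of i] by simp
    qed
    hence "k = (\<lambda>_. 1)" by auto
    hence "M = mat 1" by (simp add: Ms spec_one[OF oz])
    hence "Si ** M ** Si = Si ** Si" by simp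
    also have "Si ** M ** Si = Yi"
    proof -
      have SSi: "S ** Si = mat 1" using SiS matrix_left_right_inverse by blast
      have "Si ** M ** Si = (Si ** S) ** Yi ** (S ** Si)" by (simp add: M_def matrix_mul_assoc)
      thus ?thesis by (simp add: SiS SSi)
    qed
    finally have "matrix_inv Y = matrix_inv X" using SiSi Yi_def by simp
    hence "matrix_inv (matrix_inv Y) = matrix_inv (matrix_inv X)" by simp
    thus "X = Y" using inv_inv[OF ev X] inv_inv[OF ev Y] by simp
  qed
  thus ?thesis using D snn by simp
qed


lemma mm_add_left: "((A::real^'n::finite^'n) + B) ** C = A ** C + B ** C"
  by (simp add: vec_eq_iff matrix_matrix_mult_def sum.distrib algebra_simps)
lemma mm_diff_left: "((A::real^'n::finite^'n) - B) ** C = A ** C - B ** C"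
  by (simp add: vec_eq_iff matrix_matrix_mult_def sum_subtractf algebra_simps)
lemma mm_scale_left: "(c *\<^sub>R (A::real^'n::finite^'n)) ** C = c *\<^sub>R (A ** C)"
  by (simp add: scalar_matrix_assoc)

lemma frob_sym_trace: "transpose A = A \<Longrightarrow> frob A B = trace (A ** B)"
  by (simp add: frob_def)

lemma posdef_psd: "posdef A \<Longrightarrow> psd A"
  unfolding posdef_def psd_def by (metis inner_zero_left less_le order_refl)

lemma proj_props:
  fixes eig :: "'n::finite eigfun" and Ut :: "real^'n^'n"
  assumes ev: "valid_eig eig" and Ut: "posdef Ut"
  shows "density (proj Ut) \<and> posdef (proj Ut) \<and>
         (\<forall>V. density V \<and> posdef V \<longrightarrow> logdet_div V (proj Ut) \<le> logdet_div V Ut)"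
proof -
  define Ui where "Ui = matrix_inv Ut"
  have Ui: "posdef Ui" unfolding Ui_def by (rule posdef_inv[OF ev Ut])
  obtain a z where oz: "ortho z" and a: "\<And>i. a i > 0" and Uis: "Ui = spec a z"
    using posdef_ex[OF ev Ui] by blast
  define f where "f = (\<lambda>x::real. \<Sum>i\<in>UNIV. 1 / (a i + x))"
  obtain k where k: "\<And>i. a k \<le> a i"
  proof -
    have "Min (range a) \<in> range a" by (rule Min_in) auto
    then obtain k where "a k = Min (range a)" by (metis rangeE)
    thus ?thesis using that by (metis Min_le finite rangeI finite_imageI)
  qed
  define l0 where "l0 = 1/2 - a k"
  define l1 where "l1 = real CARD('n)"
  have cpos: "CARD('n) > 0" by simp
  have pos0: "a i + x > 0" if "l0 \<le> x" for i x using k[of i] that unfolding l0_def by linarith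
  have "\<exists>x. l0 \<le> x \<and> x \<le> l1 \<and> f x = 1"
  proof (rule IVT2)
    have l1p: "l1 > 0" using cpos by (simp add: l1_def)
    have "1 / (a i + l1) \<le> 1 / l1" for i
      by (rule divide_left_mono) (use a[of i] l1p in auto)
    hence "f l1 \<le> (\<Sum>i\<in>(UNIV::'n set). 1 / l1)"
      unfolding f_def by (intro sum_mono) auto
    also have "\<dots> = 1" using cpos by (simp add: l1_def)
    finally show "f l1 \<le> 1" .
    have "1 \<le> 1 / (a k + l0)" by (simp add: l0_def)
    also have "\<dots> \<le> f l0" unfolding f_def
      by (rule member_le_sum) (use pos0 in \<open>auto intro: less_imp_le\<close>)
    finally show "1 \<le> f l0" .
    have "real CARD('n) \<ge> 1" using cpos by linarith
    thus "l0 \<le> l1" unfolding l0_def l1_def using a[of k] by linarith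
    show "\<forall>x. l0 \<le> x \<and> x \<le> l1 \<longrightarrow> isCont f x"
    proof (intro allI impI)
      fix x assume "l0 \<le> x \<and> x \<le> l1"
      hence nz: "\<And>i. a i + x \<noteq> 0" using pos0 by (metis less_irrefl)
      show "isCont f x" unfolding f_def by (intro continuous_intros) (use nz in auto)
    qed
  qed
  then obtain lam where lam0: "l0 \<le> lam" and flam: "f lam = 1" by blast
  have apos: "\<And>i. a i + lam > 0" using pos0[OF lam0] .
  have ane: "\<And>i. a i + lam \<noteq> 0" using apos by (metis less_irrefl)
  define W where "W = spec (\<lambda>i. 1 / (a i + lam)) z"
  define Wi where "Wi = spec (\<lambda>i. a i + lam) z"
  have Wpd: "posdef W" unfolding W_def by (rule posdef_spec[OF oz]) (use apos in simp)
  have Wden: "density W" using Wpd posdef_psd flam oz by (simp add: density_def W_def trace_spec f_def)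
  have WiW: "matrix_inv W = Wi" using ane by (simp add: W_def Wi_def spec_inv[OF oz])
  have WiU: "Wi = Ui + lam *\<^sub>R mat 1"
    by (simp add: Wi_def Uis spec_one[OF oz, symmetric] spec_scale spec_add)
  define K where "K = ln (det Ut) - ln (det W) - lam"
  have key: "logdet_div V Ut = logdet_div V W + K" if "density V" "posdef V" for V :: "real^'n^'n"
  proof -
    have "trace (Wi ** V) = trace (Ui ** V) + lam"
      using that by (simp add: WiU mm_add_left mm_scale_left trace_add trace_scale density_def)
    thus ?thesis using D_alt[OF ev that(2) Ut] D_alt[OF ev that(2) Wpd]
      by (simp add: K_def WiW Ui_def)
  qed
  have DWW: "logdet_div W W = 0"
    using D_alt[OF ev Wpd Wpd] by (simp add: inv_mul_l[OF ev Wpd] trace_I)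
  have KD: "K = logdet_div W Ut" using key[OF Wden Wpd] DWW by simp
  have Kn: "K \<ge> 0" using D_core[OF ev Wpd Ut] KD by simp
  have Wmin: "density W \<and> posdef W \<and> (\<forall>V. density V \<and> posdef V \<longrightarrow> logdet_div W Ut \<le> logdet_div V Ut)"
  proof (intro conjI allI impI Wden Wpd)
    fix V :: "real^'n^'n" assume V: "density V \<and> posdef V"
    have "logdet_div V W \<ge> 0" using D_core[OF ev _ Wpd, of V] V by blast
    thus "logdet_div W Ut \<le> logdet_div V Ut" using key[of V] V KD by simp
  qed
  define P where "P = proj Ut"
  have P: "density P \<and> posdef P \<and> (\<forall>V. density V \<and> posdef V \<longrightarrow> logdet_div P Ut \<le> logdet_div V Ut)"
    unfolding P_def proj_def by (rule someI[of _ W]) (rule Wmin)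
  have "logdet_div P Ut \<le> logdet_div W Ut" using P Wden Wpd by blast
  hence "logdet_div P W \<le> 0" using key[of P] P KD by simp
  hence PW: "P = W" using D_core[OF ev _ Wpd, of P] P by blast
  have "\<forall>V::real^'n^'n. density V \<and> posdef V \<longrightarrow> logdet_div V W \<le> logdet_div V Ut"
    using key Kn by simp
  thus ?thesis using P unfolding P_def[symmetric] PW by blast
qed

lemma omd_step:
  fixes eig :: "'n::finite eigfun" and W :: "real^'n^'n"
  assumes ev: "valid_eig eig" and W: "posdef W" and A: "posdef (matrix_inv W + \<eta> *\<^sub>R Lt)"
    and U: "posdef U" "density U"
  shows "\<eta> * frob (W - U) Lt \<le> logdet_div U W - logdet_div U (proj (Wtil \<eta> W Lt))
           + \<eta> * frob (W - Wtil \<eta> W Lt) Lt"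
proof -
  define Am where "Am = matrix_inv W + \<eta> *\<^sub>R Lt"
  define Wt where "Wt = matrix_inv Am"
  have Wt_eq: "Wtil \<eta> W Lt = Wt" by (simp add: Wtil_def Wt_def Am_def)
  have Wt: "posdef Wt" unfolding Wt_def Am_def by (rule posdef_inv[OF ev A])
  have iWt: "matrix_inv Wt = Am" unfolding Wt_def Am_def by (rule inv_inv[OF ev A])
  have AWt: "Am ** Wt = mat 1" unfolding Wt_def Am_def by (rule inv_mul_r[OF ev A])
  have Wi: "matrix_inv W = Am - \<eta> *\<^sub>R Lt" by (simp add: Am_def)
  have tU: "transpose U = U" using U(1) by (rule symm_posdef)
  have tW: "transpose W = W" using W by (rule symm_posdef)
  have tWt: "transpose Wt = Wt" using Wt by (rule symm_posdef)
  have fU: "frob U Lt = trace (Lt ** U)" by (simp add: frob_sym_trace[OF tU]) (rule trace_mul_sym)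
  have fWt: "frob Wt Lt = trace (Lt ** Wt)" by (simp add: frob_sym_trace[OF tWt]) (rule trace_mul_sym)
  have D1: "logdet_div U W = trace (matrix_inv W ** U) - ln (det U) + ln (det W) - real CARD('n)"
    by (rule D_alt[OF ev U(1) W])
  have D2: "logdet_div U Wt = trace (matrix_inv W ** U) + \<eta> * frob U Lt - ln (det U) + ln (det Wt) - real CARD('n)"
    using D_alt[OF ev U(1) Wt] by (simp add: iWt Am_def mm_add_left mm_scale_left trace_add trace_scale fU)
  have D3: "logdet_div Wt W = real CARD('n) - \<eta> * frob Wt Lt - ln (det Wt) + ln (det W) - real CARD('n)"
    using D_alt[OF ev Wt W] by (simp add: Wi mm_diff_left mm_scale_left trace_sub trace_scale fWt AWt trace_I)
  have "logdet_div Wt W \<ge> 0" using D_core[OF ev Wt W] by simp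
  moreover have "logdet_div U (proj Wt) \<le> logdet_div U Wt" using proj_props[OF ev Wt] U by blast
  ultimately show ?thesis unfolding Wt_eq frob_diff_left right_diff_distrib using D1 D2 D3
    by linarith
qed


lemma finite_samp: "finite (set_pmf (samp mode \<gamma> eig W L))"
  by (cases mode) (auto simp: samp_def Let_def set_bind_pmf intro!: finite_UN_I)

lemma traj_len: "h \<in> set_pmf (traj mode \<gamma> \<eta> eig env k) \<Longrightarrow> length h = k"
  by (induction k arbitrary: h) (auto simp: set_bind_pmf)

lemma finite_traj: "finite (set_pmf (traj mode \<gamma> \<eta> eig env k))"
  by (induction k) (auto simp: set_bind_pmf finite_samp intro!: finite_UN_I)

lemma traj_take: "t \<le> T \<Longrightarrow> map_pmf (take t) (traj mode \<gamma> \<eta> eig env T) = traj mode \<gamma> \<eta> eig env t"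
proof (induction T arbitrary: t)
  case 0 thus ?case by simp
next
  case (Suc T)
  show ?case
  proof (cases "t = Suc T")
    case True
    have "map_pmf (take t) (traj mode \<gamma> \<eta> eig env (Suc T)) = map_pmf id (traj mode \<gamma> \<eta> eig env (Suc T))"
      by (rule map_pmf_cong) (auto simp: True dest: traj_len)
    thus ?thesis using True by simp
  next
    case False
    hence tT: "t \<le> T" using Suc.prems by simp
    have "map_pmf (take t) (traj mode \<gamma> \<eta> eig env (Suc T)) =
          traj mode \<gamma> \<eta> eig env T \<bind> (\<lambda>h. return_pmf (take t h))"
      unfolding traj.simps map_bind_pmf
    proof (rule bind_pmf_cong[OF refl])
      fix h assume "h \<in> set_pmf (traj mode \<gamma> \<eta> eig env T)"
      hence "length h = T" by (rule traj_len)
      hence "map_pmf (take t) (map_pmf (\<lambda>(w, Lt). h @ [(env h, w, Lt)]) (samp mode \<gamma> eig (Wfrom \<eta> W1 h) (env h)))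
            = map_pmf (\<lambda>_. take t h) (samp mode \<gamma> eig (Wfrom \<eta> W1 h) (env h))"
        using tT by (simp add: pmf.map_comp o_def case_prod_beta)
      thus "map_pmf (take t) (map_pmf (\<lambda>(w, Lt). h @ [(env h, w, Lt)]) (samp mode \<gamma> eig (Wfrom \<eta> W1 h) (env h)))
            = return_pmf (take t h)" by simp
    qed
    also have "\<dots> = map_pmf (take t) (traj mode \<gamma> \<eta> eig env T)" by (simp add: map_pmf_def)
    also have "\<dots> = traj mode \<gamma> \<eta> eig env t" by (rule Suc.IH[OF tT])
    finally show ?thesis .
  qed
qed

lemma exp_take: "t \<le> T \<Longrightarrow>
  measure_pmf.expectation (traj mode \<gamma> \<eta> eig env T) (\<lambda>h. f (take t h)) =
  measure_pmf.expectation (traj mode \<gamma> \<eta> eig env t) (f :: _ \<Rightarrow> real)"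
  by (subst traj_take[symmetric], assumption) simp

lemma exp_finite: "finite (set_pmf p) \<Longrightarrow> measure_pmf.expectation p (f::_\<Rightarrow>real) = (\<Sum>a\<in>set_pmf p. f a * pmf p a)"
  by (rule integral_measure_pmf_real) auto

lemma exp_step:
  "measure_pmf.expectation (traj mode \<gamma> \<eta> eig env (Suc t)) (f :: _ \<Rightarrow> real) =
   measure_pmf.expectation (traj mode \<gamma> \<eta> eig env t)
     (\<lambda>h. measure_pmf.expectation (samp mode \<gamma> eig (Wfrom \<eta> W1 h) (env h))
        (\<lambda>(w, Lt). f (h @ [(env h, w, Lt)])))"
proof -
  let ?p = "traj mode \<gamma> \<eta> eig env t"
  let ?g = "\<lambda>h. map_pmf (\<lambda>(w, Lt). h @ [(env h, w, Lt)]) (samp mode \<gamma> eig (Wfrom \<eta> W1 h) (env h))"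
  have "measure_pmf.expectation (traj mode \<gamma> \<eta> eig env (Suc t)) f =
        (\<Sum>a\<in>set_pmf ?p. pmf ?p a *\<^sub>R measure_pmf.expectation (?g a) f)"
    unfolding traj.simps by (rule pmf_expectation_bind) (auto simp: finite_traj finite_samp)
  also have "\<dots> = (\<Sum>a\<in>set_pmf ?p. measure_pmf.expectation (samp mode \<gamma> eig (Wfrom \<eta> W1 a) (env a))
        (\<lambda>(w, Lt). f (a @ [(env a, w, Lt)])) * pmf ?p a)"
    by (simp add: mult.commute case_prod_unfold)
  also have "\<dots> = measure_pmf.expectation ?p (\<lambda>h. measure_pmf.expectation (samp mode \<gamma> eig (Wfrom \<eta> W1 h) (env h))
        (\<lambda>(w, Lt). f (h @ [(env h, w, Lt)])))"
    by (rule exp_finite[symmetric]) (rule finite_traj)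
  finally show ?thesis .
qed

lemma round_exp:
  fixes F :: "_ \<Rightarrow> _ \<Rightarrow> _ \<Rightarrow> _ \<Rightarrow> real"
  assumes "t < T"
  shows "measure_pmf.expectation (traj mode \<gamma> \<eta> eig env T) (\<lambda>h. F (take t h) (Lh h t) (wh h t) (Lth h t)) =
   measure_pmf.expectation (traj mode \<gamma> \<eta> eig env t)
     (\<lambda>h. measure_pmf.expectation (samp mode \<gamma> eig (Wfrom \<eta> W1 h) (env h))
        (\<lambda>(w, Lt). F h (env h) w Lt))"
proof -
  define G where "G = (\<lambda>h. F (take t h) (Lh h t) (wh h t) (Lth h t) :: real)"
  have "measure_pmf.expectation (traj mode \<gamma> \<eta> eig env T) G =
        measure_pmf.expectation (traj mode \<gamma> \<eta> eig env T) (\<lambda>h. G (take (Suc t) h))"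
  proof (rule integral_cong_AE)
    show "AE h in measure_pmf (traj mode \<gamma> \<eta> eig env T). G h = G (take (Suc t) h)"
    proof (rule AE_pmfI)
      fix h assume "h \<in> set_pmf (traj mode \<gamma> \<eta> eig env T)"
      hence "length h = T" by (rule traj_len)
      thus "G h = G (take (Suc t) h)" using assms by (simp add: G_def Lh_def wh_def Lth_def)
    qed
  qed auto
  also have "\<dots> = measure_pmf.expectation (traj mode \<gamma> \<eta> eig env (Suc t)) G"
    using assms by (intro exp_take) simp
  also have "\<dots> = measure_pmf.expectation (traj mode \<gamma> \<eta> eig env t)
     (\<lambda>h. measure_pmf.expectation (samp mode \<gamma> eig (Wfrom \<eta> W1 h) (env h))
        (\<lambda>(w, Lt). G (h @ [(env h, w, Lt)])))" by (rule exp_step)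
  also have "\<dots> = measure_pmf.expectation (traj mode \<gamma> \<eta> eig env t)
     (\<lambda>h. measure_pmf.expectation (samp mode \<gamma> eig (Wfrom \<eta> W1 h) (env h))
        (\<lambda>(w, Lt). F h (env h) w Lt))"
  proof (rule integral_cong_AE)
    show "AE h in measure_pmf (traj mode \<gamma> \<eta> eig env t).
       measure_pmf.expectation (samp mode \<gamma> eig (Wfrom \<eta> W1 h) (env h)) (\<lambda>(w, Lt). G (h @ [(env h, w, Lt)])) =
       measure_pmf.expectation (samp mode \<gamma> eig (Wfrom \<eta> W1 h) (env h)) (\<lambda>(w, Lt). F h (env h) w Lt)"
    proof (rule AE_pmfI)
      fix h assume "h \<in> set_pmf (traj mode \<gamma> \<eta> eig env t)"
      hence "length h = t" by (rule traj_len)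
      thus "measure_pmf.expectation (samp mode \<gamma> eig (Wfrom \<eta> W1 h) (env h)) (\<lambda>(w, Lt). G (h @ [(env h, w, Lt)])) =
       measure_pmf.expectation (samp mode \<gamma> eig (Wfrom \<eta> W1 h) (env h)) (\<lambda>(w, Lt). F h (env h) w Lt)"
        by (simp add: G_def Lh_def wh_def Lth_def nth_append)
    qed
  qed auto
  finally show ?thesis unfolding G_def .
qed

lemma Wfrom_snoc: "Wfrom \<eta> W (xs @ [(L, w, Lt)]) = proj (Wtil \<eta> (Wfrom \<eta> W xs) Lt)"
  by (induction \<eta> W xs rule: Wfrom.induct) auto

lemma Wt_Suc: "t < length h \<Longrightarrow> Wt \<eta> h (Suc t) = proj (Wtil \<eta> (Wt \<eta> h t) (Lth h t))"
  by (cases "h ! t") (simp add: Wt_def take_Suc_conv_app_nth Wfrom_snoc Lth_def)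

lemma W1_props: "posdef (W1 :: real^'n::finite^'n) \<and> density (W1 :: real^'n^'n)"
proof -
  have t: "transpose (W1 :: real^'n^'n) = W1"
    by (simp add: W1_def vec_eq_iff transpose_def mat_def)
  have q: "x \<bullet> (W1 *v x) = (1 / real CARD('n)) * (x \<bullet> x)" for x :: "real^'n"
    by (simp add: W1_def mv_scale_left)
  have tr: "trace (W1 :: real^'n^'n) = 1" by (simp add: W1_def trace_scale trace_I)
  show ?thesis
    unfolding posdef_def density_def psd_def symmetric_mat_def using t q tr by auto
qed

lemma invariant:
  fixes eig :: "'n::finite eigfun"
  assumes ev: "valid_eig eig"
    and pd: "\<forall>h\<in>set_pmf (traj mode \<gamma> \<eta> eig env T). \<forall>t<T. posdef (matrix_inv (Wt \<eta> h t) + \<eta> *\<^sub>R Lth h t)"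
    and h: "h \<in> set_pmf (traj mode \<gamma> \<eta> eig env T)"
  shows "t \<le> T \<Longrightarrow> posdef (Wt \<eta> h t) \<and> density (Wt \<eta> h t)"
proof (induction t)
  case 0 thus ?case using W1_props by (simp add: Wt_def)
next
  case (Suc t)
  have len: "length h = T" using h by (rule traj_len)
  have A: "posdef (matrix_inv (Wt \<eta> h t) + \<eta> *\<^sub>R Lth h t)" using pd h Suc.prems by simp
  have P: "posdef (Wtil \<eta> (Wt \<eta> h t) (Lth h t))" unfolding Wtil_def by (rule posdef_inv[OF ev A])
  have "Wt \<eta> h (Suc t) = proj (Wtil \<eta> (Wt \<eta> h t) (Lth h t))" using Wt_Suc[of t h \<eta>] len Suc.prems by simp
  thus ?case using proj_props[OF ev P] by simp
qed


lemma pmf_embed_fin: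
  fixes p :: "'a::finite \<Rightarrow> real"
  assumes "\<And>i. 0 \<le> p i" "(\<Sum>i\<in>UNIV. p i) = 1"
  shows "pmf (embed_pmf p) x = p x"
proof -
  have "(\<integral>\<^sup>+x. ennreal (p x) \<partial>count_space UNIV) = 1"
    using assms by (simp add: nn_integral_count_space_finite sum_ennreal)
  thus ?thesis using pmf_embed_pmf[of p] assms by simp
qed

lemma exp_embed:
  fixes p :: "'a::finite \<Rightarrow> real" and G :: "'a \<Rightarrow> 'b pmf"
  assumes "\<And>i. 0 \<le> p i" "(\<Sum>i\<in>UNIV. p i) = 1" "\<And>i. finite (set_pmf (G i))"
  shows "measure_pmf.expectation (bind_pmf (embed_pmf p) G) (\<phi>::'b \<Rightarrow> real) =
         (\<Sum>i\<in>UNIV. p i * measure_pmf.expectation (G i) \<phi>)"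
  by (subst pmf_expectation_bind[of UNIV]) (use assms in \<open>auto simp: pmf_embed_fin\<close>)

lemma exp_coin:
  "measure_pmf.expectation (bind_pmf (pmf_of_set (UNIV::'a::finite set)) (\<lambda>s. return_pmf (G s))) (\<phi>::_ \<Rightarrow> real) =
   (\<Sum>s\<in>UNIV. \<phi> (G s)) / real (card (UNIV::'a set))"
  by (subst pmf_expectation_bind_pmf_of_set) (simp_all add: sum_divide_distrib divide_inverse_commute sum_distrib_left)

lemma G_sparse:
  fixes p :: "'a::finite \<Rightarrow> real"
  assumes "\<And>i. 0 \<le> p i" "(\<Sum>i\<in>UNIV. p i) = 1"
  shows "measure_pmf.expectation (bind_pmf (embed_pmf p) (\<lambda>I. bind_pmf (embed_pmf p) (\<lambda>J.
            bind_pmf (pmf_of_set UNIV) (\<lambda>s. return_pmf (G I J s))))) (\<phi> :: _ \<Rightarrow> real)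
       = (\<Sum>I\<in>UNIV. \<Sum>J\<in>UNIV. p I * p J * ((\<phi> (G I J True) + \<phi> (G I J False)) / 2))"
proof -
  have fin: "finite (set_pmf (bind_pmf (embed_pmf p) (\<lambda>J. bind_pmf (pmf_of_set UNIV) (\<lambda>s. return_pmf (G I J s)))))" for I
    by (auto simp: set_bind_pmf)
  have fin2: "finite (set_pmf (bind_pmf (pmf_of_set UNIV) (\<lambda>s. return_pmf (G I J s))))" for I J
    by (auto simp: set_bind_pmf)
  have UNIVb: "(UNIV :: bool set) = {True, False}" by auto
  show ?thesis
    apply (subst exp_embed[OF assms fin])
    apply (subst exp_embed[OF assms fin2])
    apply (subst exp_coin)
    apply (simp add: sum_distrib_left UNIVb algebra_simps add_divide_distrib)
    done
qed

lemma G_dense: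
  fixes p :: "'a::finite \<Rightarrow> real"
  assumes "\<And>i. 0 \<le> p i" "(\<Sum>i\<in>UNIV. p i) = 1"
  shows "measure_pmf.expectation (bind_pmf (bernoulli_pmf (1/2)) (\<lambda>B. if B then
            bind_pmf (embed_pmf p) (\<lambda>I. return_pmf (G1 I))
          else bind_pmf (pmf_of_set (UNIV :: ('a \<Rightarrow> bool) set)) (\<lambda>s. return_pmf (G0 s)))) (\<phi> :: _ \<Rightarrow> real)
       = (\<Sum>I\<in>UNIV. p I * \<phi> (G1 I)) / 2 + (\<Sum>s\<in>UNIV. \<phi> (G0 s)) / real (card (UNIV :: ('a \<Rightarrow> bool) set)) / 2"
proof -
  have fin: "finite (set_pmf (if B then bind_pmf (embed_pmf p) (\<lambda>I. return_pmf (G1 I))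
          else bind_pmf (pmf_of_set (UNIV :: ('a \<Rightarrow> bool) set)) (\<lambda>s. return_pmf (G0 s))))" for B
    by (auto simp: set_bind_pmf)
  have UNIVb: "(UNIV :: bool set) = {True, False}" by auto
  have "measure_pmf.expectation (bind_pmf (bernoulli_pmf (1/2)) (\<lambda>B. if B then
            bind_pmf (embed_pmf p) (\<lambda>I. return_pmf (G1 I))
          else bind_pmf (pmf_of_set (UNIV :: ('a \<Rightarrow> bool) set)) (\<lambda>s. return_pmf (G0 s)))) \<phi> =
        (\<Sum>B\<in>UNIV. pmf (bernoulli_pmf (1/2)) B *\<^sub>R measure_pmf.expectation (if B then
            bind_pmf (embed_pmf p) (\<lambda>I. return_pmf (G1 I))
          else bind_pmf (pmf_of_set (UNIV :: ('a \<Rightarrow> bool) set)) (\<lambda>s. return_pmf (G0 s))) \<phi>)"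
    by (rule pmf_expectation_bind) (use fin in auto)
  also have "\<dots> = (\<Sum>I\<in>UNIV. p I * \<phi> (G1 I)) / 2 + (\<Sum>s\<in>UNIV. \<phi> (G0 s)) / real (card (UNIV :: ('a \<Rightarrow> bool) set)) / 2"
    by (simp add: UNIVb exp_embed[OF assms] exp_coin)
  finally show ?thesis .
qed


definition SP :: "('n::finite \<Rightarrow> real^'n) \<Rightarrow> real^'n^'n \<Rightarrow> ('n \<Rightarrow> real) \<Rightarrow> 'n \<Rightarrow> 'n \<Rightarrow> bool \<Rightarrow> (real^'n) \<times> (real^'n^'n)" where
 "SP u L lam I J s = (if I = J then (u I, ((u I \<bullet> (L *v u I)) / (lam I)^2) *\<^sub>R outer (u I) (u I))
    else (let w = (1 / sqrt 2) *\<^sub>R (u I + sgn_of s *\<^sub>R u J)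
      in (w, (sgn_of s * (w \<bullet> (L *v w)) / (2 * lam I * lam J)) *\<^sub>R (outer (u I) (u J) + outer (u J) (u I)))))"

definition DP1 :: "('n::finite \<Rightarrow> real^'n) \<Rightarrow> real^'n^'n \<Rightarrow> real^'n^'n \<Rightarrow> 'n \<Rightarrow> (real^'n) \<times> (real^'n^'n)" where
 "DP1 u L R I = (u I, (2 * (u I \<bullet> (L *v u I))) *\<^sub>R (R ** outer (u I) (u I) ** R))"

definition DP0 :: "('n::finite \<Rightarrow> real^'n) \<Rightarrow> real^'n^'n \<Rightarrow> ('n \<Rightarrow> real) \<Rightarrow> real^'n^'n \<Rightarrow> ('n \<Rightarrow> bool) \<Rightarrow> (real^'n) \<times> (real^'n^'n)" where
 "DP0 u L lam Wi s = (let w = (\<Sum>i\<in>UNIV. (sgn_of (s i) * sqrt (lam i)) *\<^sub>R u i)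
    in (w, (w \<bullet> (L *v w)) *\<^sub>R (Wi ** outer w w ** Wi - Wi)))"

lemma samp_sparse_eq:
  "samp Sparse \<gamma> eig W L =
   bind_pmf (embed_pmf (\<lambda>i. (1 - \<gamma>) * fst (eig W) i + \<gamma> / real CARD('n))) (\<lambda>I.
     bind_pmf (embed_pmf (\<lambda>i. (1 - \<gamma>) * fst (eig W) i + \<gamma> / real CARD('n))) (\<lambda>J.
       bind_pmf (pmf_of_set UNIV) (\<lambda>s. return_pmf
         (SP (snd (eig W)) L (\<lambda>i. (1 - \<gamma>) * fst (eig W) i + \<gamma> / real CARD('n)) I J s))))"
  for eig :: "'n::finite eigfun"
  by (simp add: samp_def SP_def Let_def)

lemma samp_dense_eq:
  "samp Dense \<gamma> eig W L =
   bind_pmf (bernoulli_pmf (1/2)) (\<lambda>B. if B then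
     bind_pmf (embed_pmf (\<lambda>i. (1 - \<gamma>) * fst (eig W) i + \<gamma> / real CARD('n))) (\<lambda>I.
        return_pmf (DP1 (snd (eig W)) L (inv_sqrt eig W) I))
     else bind_pmf (pmf_of_set (UNIV :: ('n \<Rightarrow> bool) set)) (\<lambda>s. return_pmf
        (DP0 (snd (eig W)) L (\<lambda>i. (1 - \<gamma>) * fst (eig W) i + \<gamma> / real CARD('n)) (matrix_inv W) s)))"
  for eig :: "'n::finite eigfun"
  unfolding samp_def DP1_def DP0_def Let_def by simp

lemma mv_add_right: "(A::real^'n::finite^'n) *v (x + y) = A *v x + A *v y"
  by (rule matrix_vector_right_distrib)

lemma ell_pair: "(a *\<^sub>R x + b *\<^sub>R y) \<bullet> ((L::real^'n::finite^'n) *v (a *\<^sub>R x + b *\<^sub>R y)) =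
   a*a*(x \<bullet> (L *v x)) + a*b*(x \<bullet> (L *v y)) + b*a*(y \<bullet> (L *v x)) + b*b*(y \<bullet> (L *v y))"
  by (simp add: mv_add_right mv_scale_right inner_add_left inner_add_right algebra_simps)

lemma ell_lin: "(\<Sum>i\<in>UNIV. a i *\<^sub>R u i) \<bullet> ((M::real^'n::finite^'n) *v (\<Sum>j\<in>UNIV. b j *\<^sub>R u j)) =
   (\<Sum>i\<in>UNIV. \<Sum>j\<in>UNIV. a i * b j * (u i \<bullet> (M *v u j)))"
  by (simp add: mv_sum_right mv_scale_right inner_sum_left inner_sum_right sum_distrib_left mult_ac) (rule sum.swap)

lemma sym_coef: "transpose L = L \<Longrightarrow> u i \<bullet> ((L::real^'n::finite^'n) *v u j) = u j \<bullet> (L *v u i)"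
  using inner_mv_transpose[of "u i" L "u j"] by (simp add: inner_commute)

lemma frob_uminus_right: "frob C (- A) = - frob C A"
  unfolding frob_alt by (simp add: sum_negf)

lemma sqrt2: "(1 / sqrt 2) * (1 / sqrt (2::real)) = 1/2"
  by (simp add: divide_simps)

context
  fixes u :: "'n::finite \<Rightarrow> real^'n" and L :: "real^'n^'n" and lam :: "'n \<Rightarrow> real"
  assumes o: "ortho u" and Lsym: "transpose L = L" and lpos: "\<And>i. lam i > 0" and lsum: "(\<Sum>i\<in>UNIV. lam i) = 1"
begin

lemma lnn: "\<And>i. 0 \<le> lam i" using lpos less_imp_le by blast

lemma ell_plus:
  "((1 / sqrt 2) *\<^sub>R u I + (1 / sqrt 2) *\<^sub>R u J) \<bullet> (L *v ((1 / sqrt 2) *\<^sub>R u I + (1 / sqrt 2) *\<^sub>R u J)) =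
     ((u I \<bullet> (L *v u I)) + (u J \<bullet> (L *v u J))) / 2 + (u I \<bullet> (L *v u J))"
  unfolding ell_pair sym_coef[OF Lsym, where i=J and j=I] by (simp add: field_simps)

lemma ell_minus:
  "((1 / sqrt 2) *\<^sub>R u I - (1 / sqrt 2) *\<^sub>R u J) \<bullet> (L *v ((1 / sqrt 2) *\<^sub>R u I - (1 / sqrt 2) *\<^sub>R u J)) =
     ((u I \<bullet> (L *v u I)) + (u J \<bullet> (L *v u J))) / 2 - (u I \<bullet> (L *v u J))"
proof -
  have e: "(1 / sqrt 2) *\<^sub>R u I - (1 / sqrt 2) *\<^sub>R u J = (1 / sqrt 2) *\<^sub>R u I + (- 1 / sqrt 2) *\<^sub>R u J"
    by simp
  show ?thesis unfolding e ell_pair sym_coef[OF Lsym, where i=J and j=I] by (simp add: field_simps)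
qed

lemma sparse1:
  "measure_pmf.expectation (bind_pmf (embed_pmf lam) (\<lambda>I. bind_pmf (embed_pmf lam) (\<lambda>J.
      bind_pmf (pmf_of_set UNIV) (\<lambda>s. return_pmf (SP u L lam I J s))))) (\<lambda>(w, Lt). w \<bullet> (L *v w))
   = (\<Sum>i\<in>UNIV. lam i * (u i \<bullet> (L *v u i)))"
proof -
  have step: "lam I * lam J * (((\<lambda>(w, Lt). w \<bullet> (L *v w)) (SP u L lam I J True) +
        (\<lambda>(w, Lt). w \<bullet> (L *v w)) (SP u L lam I J False)) / 2)
      = lam I * lam J * (u I \<bullet> (L *v u I)) / 2 + lam I * lam J * (u J \<bullet> (L *v u J)) / 2" for I J
  proof (cases "I = J")
    case True thus ?thesis by (simp add: SP_def field_simps)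
  next
    case False
    thus ?thesis by (simp add: SP_def Let_def ell_plus ell_minus sgn_of_def field_simps)
  qed
  have "(\<Sum>I\<in>UNIV. \<Sum>J\<in>UNIV. lam I * lam J * (u I \<bullet> (L *v u I)) / 2 + lam I * lam J * (u J \<bullet> (L *v u J)) / 2)
     = (\<Sum>I\<in>UNIV. lam I * (u I \<bullet> (L *v u I)))"
  proof -
    have a: "(\<Sum>I\<in>UNIV. \<Sum>J\<in>UNIV. lam I * lam J * (u I \<bullet> (L *v u I)) / 2) = (\<Sum>I\<in>UNIV. lam I * (u I \<bullet> (L *v u I))) / 2"
      by (simp add: sum_divide_distrib[symmetric] sum_distrib_right[symmetric] sum_distrib_left[symmetric] lsum mult_ac)
    have b: "(\<Sum>I\<in>UNIV. \<Sum>J\<in>UNIV. lam I * lam J * (u J \<bullet> (L *v u J)) / 2) = (\<Sum>I\<in>UNIV. lam I * (u I \<bullet> (L *v u I))) / 2"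
      apply (subst sum.swap)
      by (simp add: sum_divide_distrib[symmetric] sum_distrib_right[symmetric] sum_distrib_left[symmetric] lsum mult_ac)
    show ?thesis using a b by (simp add: sum.distrib)
  qed
  thus ?thesis by (subst G_sparse[OF lnn lsum]) (simp only: step)
qed

lemma sparse2:
  assumes Asym: "transpose A = A"
  shows "measure_pmf.expectation (bind_pmf (embed_pmf lam) (\<lambda>I. bind_pmf (embed_pmf lam) (\<lambda>J.
      bind_pmf (pmf_of_set UNIV) (\<lambda>s. return_pmf (SP u L lam I J s))))) (\<lambda>(w, Lt). frob A Lt)
   = frob A L"
proof -
  have step: "lam I * lam J * (((\<lambda>(w, Lt). frob A Lt) (SP u L lam I J True) +
        (\<lambda>(w, Lt). frob A Lt) (SP u L lam I J False)) / 2)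
      = (u I \<bullet> (A *v u J)) * (u I \<bullet> (L *v u J))" for I J
  proof (cases "I = J")
    case True
    have "lam I \<noteq> 0" using lpos[of I] by simp
    thus ?thesis using True by (simp add: SP_def frob_scale_right frob_outer_right field_simps power2_eq_square)
  next
    case False
    have ne: "lam I * lam J \<noteq> 0" using lpos[of I] lpos[of J] by simp
    have s: "u J \<bullet> (A *v u I) = u I \<bullet> (A *v u J)" by (rule sym_coef[OF Asym])
    show ?thesis using False ne
      by (simp add: SP_def Let_def ell_plus ell_minus sgn_of_def frob_scale_right frob_add_right frob_diff_right frob_outer_right s frob_uminus_right field_simps)
  qed
  show ?thesis by (subst G_sparse[OF lnn lsum]) (simp only: step frob_ortho[OF o, of A L])
qed

end


definition sg :: "('n \<Rightarrow> bool) \<Rightarrow> 'n \<Rightarrow> real" where "sg s i = sgn_of (s i)"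

lemma sg_sq: "sg s i * sg s i = 1" by (simp add: sg_def sgn_of_def)

lemma flip_zero:
  fixes g :: "('n::finite \<Rightarrow> bool) \<Rightarrow> real"
  assumes "\<And>s. g (s(i := \<not> s i)) = g s"
  shows "(\<Sum>s\<in>UNIV. sg s i * g s) = 0"
proof -
  define f :: "('n \<Rightarrow> bool) \<Rightarrow> ('n \<Rightarrow> bool)" where "f = (\<lambda>s. s(i := \<not> s i))"
  have ff: "f (f s) = s" for s by (simp add: f_def fun_eq_iff)
  have inj: "inj f" by (metis ff injI)
  have surj: "f ` UNIV = UNIV" by (metis ff surj_def)
  have "(\<Sum>s\<in>UNIV. sg s i * g s) = (\<Sum>s\<in>f ` UNIV. sg s i * g s)" by (simp add: surj)
  also have "\<dots> = (\<Sum>s\<in>UNIV. sg (f s) i * g (f s))" by (subst sum.reindex[OF inj]) simp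
  also have "\<dots> = (\<Sum>s\<in>UNIV. - (sg s i * g s))"
    using assms by (intro sum.cong) (auto simp: f_def sg_def sgn_of_def)
  finally show ?thesis by (simp add: sum_negf)
qed

definition NN :: "'n::finite itself \<Rightarrow> real" where "NN _ = real (card (UNIV :: ('n \<Rightarrow> bool) set))"

lemma swap3: "(\<Sum>s\<in>A. \<Sum>i\<in>B. \<Sum>j\<in>C. F s i j) = (\<Sum>i\<in>B. \<Sum>j\<in>C. \<Sum>s\<in>A. F s i j)"
proof -
  have "(\<Sum>s\<in>A. \<Sum>i\<in>B. \<Sum>j\<in>C. F s i j) = (\<Sum>i\<in>B. \<Sum>s\<in>A. \<Sum>j\<in>C. F s i j)" by (rule sum.swap)
  also have "\<dots> = (\<Sum>i\<in>B. \<Sum>j\<in>C. \<Sum>s\<in>A. F s i j)" by (rule sum.cong[OF refl], rule sum.swap)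
  finally show ?thesis .
qed

lemma m2: fixes i j :: "'n::finite" shows "(\<Sum>s\<in>UNIV. sg s i * sg s j) = (if i = j then NN TYPE('n::finite) else 0)"
proof (cases "i = j")
  case True thus ?thesis by (simp add: sg_sq NN_def)
next
  case False
  thus ?thesis by (simp, intro flip_zero) (simp add: sg_def)
qed

lemma m4: fixes i j k l :: "'n::finite" shows "(\<Sum>s\<in>UNIV. sg s i * sg s j * sg s k * sg s l) =
   NN TYPE('n::finite) * (if k = l then (if i = j then 1 else 0)
       else (if (i = k \<and> j = l) \<or> (i = l \<and> j = k) then 1 else 0))"
proof -
  have flip: "(\<Sum>s\<in>UNIV. sg s i * (sg s j * sg s k * sg s l)) = 0" if "i \<noteq> j" "i \<noteq> k" "i \<noteq> l"
    by (rule flip_zero[where g="\<lambda>s. sg s j * sg s k * sg s l"]) (use that in \<open>simp add: sg_def\<close>)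
  show ?thesis
  proof (cases "i = j")
    case True
    hence "(\<Sum>s\<in>UNIV. sg s i * sg s j * sg s k * sg s l) = (\<Sum>s\<in>UNIV. sg s k * sg s l)"
      by (simp add: sg_sq)
    thus ?thesis using True by (simp add: m2) fastforce
  next
    case ij: False
    show ?thesis
    proof (cases "i = k")
      case True
      hence "(\<Sum>s\<in>UNIV. sg s i * sg s j * sg s k * sg s l) = (\<Sum>s\<in>UNIV. sg s j * sg s l)"
        by (intro sum.cong) (auto simp: sg_sq mult_ac)
      thus ?thesis using True ij by (auto simp: m2)
    next
      case ik: False
      show ?thesis
      proof (cases "i = l")
        case True
        hence "(\<Sum>s\<in>UNIV. sg s i * sg s j * sg s k * sg s l) = (\<Sum>s\<in>UNIV. sg s j * sg s k)"
          by (intro sum.cong) (auto simp: sg_sq mult_ac)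
        thus ?thesis using True ij ik by (auto simp: m2)
      next
        case False
        thus ?thesis using flip[OF ij ik False] ij ik by (simp add: mult_ac)
      qed
    qed
  qed
qed

lemma quad2: fixes P :: "'n::finite \<Rightarrow> 'n \<Rightarrow> real" shows "(\<Sum>s\<in>UNIV. \<Sum>i\<in>UNIV. \<Sum>j\<in>UNIV. sg s i * sg s j * P i j) = NN TYPE('n::finite) * (\<Sum>i\<in>UNIV. P i i)"
proof -
  have "(\<Sum>s\<in>UNIV. \<Sum>i\<in>UNIV. \<Sum>j\<in>UNIV. sg s i * sg s j * P i j) =
        (\<Sum>i\<in>UNIV. \<Sum>j\<in>UNIV. (\<Sum>s\<in>UNIV. sg s i * sg s j) * P i j)"
    by (subst swap3) (simp add: sum_distrib_right)
  also have "\<dots> = (\<Sum>i\<in>UNIV. NN TYPE('n) * P i i)"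
    by (simp add: m2 if_distrib if_distribR cong: if_cong)
  finally show ?thesis by (simp add: sum_distrib_left)
qed

lemma quad4: fixes P :: "'n::finite \<Rightarrow> 'n \<Rightarrow> real" shows "(\<Sum>s\<in>UNIV. sg s k * sg s l * (\<Sum>i\<in>UNIV. \<Sum>j\<in>UNIV. sg s i * sg s j * P i j)) =
   NN TYPE('n::finite) * (if k = l then (\<Sum>i\<in>UNIV. P i i) else P k l + P l k)"
proof -
  have "(\<Sum>s\<in>UNIV. sg s k * sg s l * (\<Sum>i\<in>UNIV. \<Sum>j\<in>UNIV. sg s i * sg s j * P i j)) =
        (\<Sum>s\<in>UNIV. \<Sum>i\<in>UNIV. \<Sum>j\<in>UNIV. sg s i * sg s j * sg s k * sg s l * P i j)"
    by (simp add: sum_distrib_left mult_ac)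
  also have "\<dots> = (\<Sum>i\<in>UNIV. \<Sum>j\<in>UNIV. \<Sum>s\<in>UNIV. sg s i * sg s j * sg s k * sg s l * P i j)"
    by (rule swap3)
  also have "\<dots> = (\<Sum>i\<in>UNIV. \<Sum>j\<in>UNIV. (\<Sum>s\<in>UNIV. sg s i * sg s j * sg s k * sg s l) * P i j)"
    by (simp add: sum_distrib_right)
  also have "\<dots> = NN TYPE('n) * (if k = l then (\<Sum>i\<in>UNIV. P i i) else P k l + P l k)"
  proof (cases "k = l")
    case True
    have e: "(\<Sum>s\<in>UNIV. sg s i * sg s j * sg s k * sg s l) * P i j = NN TYPE('n) * (if i = j then P i j else 0)" for i j
      using True by (simp add: m4)
    have d: "(\<Sum>j\<in>UNIV. if i = j then P i j else 0) = P i i" for i by simp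
    show ?thesis by (simp only: e sum_distrib_left[symmetric] d) (simp add: True)
  next
    case False
    have e: "(\<Sum>s\<in>UNIV. sg s i * sg s j * sg s k * sg s l) * P i j =
       NN TYPE('n) * ((if i = k \<and> j = l then P i j else 0) + (if i = l \<and> j = k then P i j else 0))" for i j
      using False by (auto simp: m4)
    have d1: "(\<Sum>j\<in>UNIV. if i = k \<and> j = l then P i j else 0) = (if i = k then P k l else 0)" for i
      by (cases "i = k") simp_all
    have d2: "(\<Sum>j\<in>UNIV. if i = l \<and> j = k then P i j else 0) = (if i = l then P l k else 0)" for i
      by (cases "i = l") simp_all
    show ?thesis by (simp only: e sum_distrib_left[symmetric] sum.distrib d1 d2) (simp add: False)
  qed
  finally show ?thesis .
qed


context
  fixes u :: "'n::finite \<Rightarrow> real^'n" and L :: "real^'n^'n" and mu :: "'n \<Rightarrow> real"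
  assumes o: "ortho u" and Lsym: "transpose L = L" and mpos: "\<And>i. mu i > 0" and msum: "(\<Sum>i\<in>UNIV. mu i) = 1"
begin

definition "Pm i j = sqrt (mu i) * sqrt (mu j) * (u i \<bullet> (L *v u j))"
definition "qq i = 1 / sqrt (mu i)"
definition "wv s = (\<Sum>i\<in>UNIV. (sgn_of (s i) * sqrt (mu i)) *\<^sub>R u i)"

lemma mnn: "\<And>i. 0 \<le> mu i" using mpos less_imp_le by blast

lemma NNpos: "NN TYPE('n) > 0" by (simp add: NN_def)

lemma ell_wv: "wv s \<bullet> (L *v wv s) = (\<Sum>i\<in>UNIV. \<Sum>j\<in>UNIV. sg s i * sg s j * Pm i j)"
  unfolding wv_def ell_lin by (simp add: Pm_def sg_def mult_ac)

lemma Pm_sym: "Pm i j = Pm j i"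
  unfolding Pm_def using sym_coef[OF Lsym, where u=u and i=i and j=j] by (simp add: mult_ac)

lemma Pm_diag: "Pm i i = mu i * (u i \<bullet> (L *v u i))"
  unfolding Pm_def using mnn[of i] by (simp add: mult.assoc[symmetric])

lemma dense1:
  "measure_pmf.expectation (bind_pmf (bernoulli_pmf (1/2)) (\<lambda>B. if B then
            bind_pmf (embed_pmf mu) (\<lambda>I. return_pmf (DP1 u L R I))
          else bind_pmf (pmf_of_set (UNIV :: ('n \<Rightarrow> bool) set)) (\<lambda>s. return_pmf (DP0 u L mu Wi s))))
     (\<lambda>(w, Lt). w \<bullet> (L *v w)) = (\<Sum>i\<in>UNIV. mu i * (u i \<bullet> (L *v u i)))"
proof -
  have e: "(\<lambda>(w, Lt). w \<bullet> (L *v w)) (DP0 u L mu Wi s) = (\<Sum>i\<in>UNIV. \<Sum>j\<in>UNIV. sg s i * sg s j * Pm i j)" for s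
    using ell_wv[of s] by (simp add: DP0_def Let_def wv_def)
  have "(\<Sum>s\<in>UNIV. (\<lambda>(w, Lt). w \<bullet> (L *v w)) (DP0 u L mu Wi s)) = NN TYPE('n) * (\<Sum>i\<in>UNIV. Pm i i)"
    by (simp only: e quad2)
  hence "(\<Sum>s\<in>UNIV. (\<lambda>(w, Lt). w \<bullet> (L *v w)) (DP0 u L mu Wi s)) / real (card (UNIV :: ('n \<Rightarrow> bool) set))
     = (\<Sum>i\<in>UNIV. mu i * (u i \<bullet> (L *v u i)))"
    using NNpos by (simp add: Pm_diag NN_def)
  moreover have "(\<Sum>I\<in>UNIV. mu I * (\<lambda>(w, Lt). w \<bullet> (L *v w)) (DP1 u L R I)) = (\<Sum>i\<in>UNIV. mu i * (u i \<bullet> (L *v u i)))"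
    by (simp add: DP1_def)
  ultimately show ?thesis by (simp add: G_dense[OF mnn msum])
qed

lemma sq_qq: "qq i * qq i = 1 / mu i"
  using mpos[of i] by (simp add: qq_def)

lemma sqrt_qq: "sqrt (mu i) * qq i = 1"
  using mpos[of i] by (simp add: qq_def)

lemma Wi_wv: "spec (\<lambda>i. 1 / mu i) u *v wv s = (\<Sum>i\<in>UNIV. (sg s i * qq i) *\<^sub>R u i)"
proof -
  have "spec (\<lambda>i. 1 / mu i) u *v wv s = (\<Sum>i\<in>UNIV. (sgn_of (s i) * sqrt (mu i) * (1 / mu i)) *\<^sub>R u i)"
    by (simp add: wv_def mv_sum_right mv_scale_right spec_mv[OF o])
  also have "\<dots> = (\<Sum>i\<in>UNIV. (sg s i * qq i) *\<^sub>R u i)"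
  proof (rule sum.cong[OF refl])
    fix i
    have "sqrt (mu i) * (1 / mu i) = qq i"
      using mpos[of i] by (simp add: qq_def field_simps)
    thus "(sgn_of (s i) * sqrt (mu i) * (1 / mu i)) *\<^sub>R u i = (sg s i * qq i) *\<^sub>R u i"
      by (simp only: sg_def mult.assoc)
  qed
  finally show ?thesis .
qed

definition "Qm A k l = qq k * qq l * (u k \<bullet> (A *v u l))"

lemma X_wv: "(spec (\<lambda>i. 1 / mu i) u *v wv s) \<bullet> (A *v (spec (\<lambda>i. 1 / mu i) u *v wv s)) =
    (\<Sum>k\<in>UNIV. \<Sum>l\<in>UNIV. sg s k * sg s l * Qm A k l)"
  unfolding Wi_wv ell_lin by (simp add: Qm_def mult_ac)

lemma FW: "frob A (spec (\<lambda>i. 1 / mu i) u) = (\<Sum>k\<in>UNIV. Qm A k k)"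
proof -
  have "frob A (spec (\<lambda>i. 1 / mu i) u) = (\<Sum>i\<in>UNIV. \<Sum>j\<in>UNIV. (u i \<bullet> (A *v u j)) * (if i = j then 1 / mu j else 0))"
    by (simp add: frob_ortho[OF o] spec_inner[OF o])
  also have "\<dots> = (\<Sum>i\<in>UNIV. (u i \<bullet> (A *v u i)) / mu i)"
    by (simp add: if_distrib cong: if_cong)
  also have "\<dots> = (\<Sum>k\<in>UNIV. Qm A k k)"
    by (intro sum.cong refl) (simp add: Qm_def sq_qq)
  finally show ?thesis .
qed

lemma G0val:
  assumes "transpose A = A"
  shows "(\<lambda>(w, Lt). frob A Lt) (DP0 u L mu (spec (\<lambda>i. 1 / mu i) u) s) =
    (\<Sum>i\<in>UNIV. \<Sum>j\<in>UNIV. sg s i * sg s j * Pm i j) *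
    ((\<Sum>k\<in>UNIV. \<Sum>l\<in>UNIV. sg s k * sg s l * Qm A k l) - (\<Sum>k\<in>UNIV. Qm A k k))"
proof -
  let ?Wi = "spec (\<lambda>i. 1 / mu i) u"
  have m: "?Wi ** outer (wv s) (wv s) ** ?Wi = outer (?Wi *v wv s) (?Wi *v wv s)"
    by (simp add: mm_outer_left mm_outer_right spec_transpose)
  show ?thesis
    unfolding DP0_def Let_def wv_def[symmetric]
    by (simp add: frob_scale_right frob_diff_right m frob_outer_right X_wv FW ell_wv)
qed

lemma G1val:
  "(\<lambda>(w, Lt). frob A Lt) (DP1 u L (spec qq u) I) = 2 * (u I \<bullet> (L *v u I)) * (u I \<bullet> (A *v u I)) / mu I"
proof -
  have m: "spec qq u ** outer (u I) (u I) ** spec qq u = (qq I * qq I) *\<^sub>R outer (u I) (u I)"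
    by (simp add: mm_outer_left mm_outer_right spec_transpose spec_mv[OF o] outer_scale_right)
       (simp add: vec_eq_iff)
  show ?thesis by (simp add: DP1_def m frob_scale_right frob_outer_right sq_qq)
qed

lemma dense2:
  assumes Asym: "transpose A = A"
  shows "measure_pmf.expectation (bind_pmf (bernoulli_pmf (1/2)) (\<lambda>B. if B then
            bind_pmf (embed_pmf mu) (\<lambda>I. return_pmf (DP1 u L (spec qq u) I))
          else bind_pmf (pmf_of_set (UNIV :: ('n \<Rightarrow> bool) set)) (\<lambda>s. return_pmf (DP0 u L mu (spec (\<lambda>i. 1 / mu i) u) s))))
     (\<lambda>(w, Lt). frob A Lt) = frob A L"
proof -
  define S where "S = (\<Sum>i\<in>UNIV. Pm i i)"
  define ell where "ell = (\<lambda>s. \<Sum>i\<in>UNIV. \<Sum>j\<in>UNIV. sg s i * sg s j * Pm i j)"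
  define Ac where "Ac = (\<lambda>k l. u k \<bullet> (A *v u l))"
  define Lc where "Lc = (\<lambda>k l. u k \<bullet> (L *v u l))"
  have QP: "Qm A k l * Pm k l = Ac k l * Lc k l" for k l
  proof -
    have "Qm A k l * Pm k l = (sqrt (mu k) * qq k) * (sqrt (mu l) * qq l) * Ac k l * Lc k l"
      by (simp add: Qm_def Pm_def Ac_def Lc_def mult_ac)
    thus ?thesis by (simp add: sqrt_qq)
  qed
  have s1: "(\<Sum>s\<in>UNIV. (\<Sum>k\<in>UNIV. \<Sum>l\<in>UNIV. sg s k * sg s l * Qm A k l) * ell s) =
      NN TYPE('n) * (\<Sum>k\<in>UNIV. \<Sum>l\<in>UNIV. Qm A k l * (if k = l then S else Pm k l + Pm l k))"
  proof -
    have "(\<Sum>s\<in>UNIV. (\<Sum>k\<in>UNIV. \<Sum>l\<in>UNIV. sg s k * sg s l * Qm A k l) * ell s) =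
          (\<Sum>s\<in>UNIV. \<Sum>k\<in>UNIV. \<Sum>l\<in>UNIV. Qm A k l * (sg s k * sg s l * ell s))"
      by (simp add: sum_distrib_right sum_distrib_left mult_ac)
    also have "\<dots> = (\<Sum>k\<in>UNIV. \<Sum>l\<in>UNIV. \<Sum>s\<in>UNIV. Qm A k l * (sg s k * sg s l * ell s))"
      by (rule swap3)
    also have "\<dots> = (\<Sum>k\<in>UNIV. \<Sum>l\<in>UNIV. Qm A k l * (\<Sum>s\<in>UNIV. sg s k * sg s l * ell s))"
      by (simp add: sum_distrib_left)
    also have "\<dots> = (\<Sum>k\<in>UNIV. \<Sum>l\<in>UNIV. Qm A k l * (NN TYPE('n) * (if k = l then S else Pm k l + Pm l k)))"
      unfolding ell_def S_def by (simp only: quad4)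
    also have "\<dots> = NN TYPE('n) * (\<Sum>k\<in>UNIV. \<Sum>l\<in>UNIV. Qm A k l * (if k = l then S else Pm k l + Pm l k))"
      by (simp add: sum_distrib_left mult.left_commute)
    finally show ?thesis .
  qed
  have s2: "(\<Sum>s\<in>UNIV. ell s) = NN TYPE('n) * S"
    unfolding ell_def S_def by (rule quad2)
  define Off where "Off = (\<Sum>k\<in>UNIV. \<Sum>l\<in>UNIV. if k = l then 0 else Ac k l * Lc k l)"
  have s3: "(\<Sum>k\<in>UNIV. \<Sum>l\<in>UNIV. Qm A k l * (if k = l then S else Pm k l + Pm l k)) =
            S * (\<Sum>k\<in>UNIV. Qm A k k) + 2 * Off"
  proof -
    have "Qm A k l * (if k = l then S else Pm k l + Pm l k) =
          (if k = l then S * Qm A k k else 0) + 2 * (if k = l then 0 else Ac k l * Lc k l)" for k l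
      using QP[of k l] by (auto simp: Pm_sym[of l k] algebra_simps)
    hence "(\<Sum>k\<in>UNIV. \<Sum>l\<in>UNIV. Qm A k l * (if k = l then S else Pm k l + Pm l k)) =
           (\<Sum>k\<in>UNIV. \<Sum>l\<in>UNIV. (if k = l then S * Qm A k k else 0) + 2 * (if k = l then 0 else Ac k l * Lc k l))"
      by simp
    also have "\<dots> = S * (\<Sum>k\<in>UNIV. Qm A k k) + 2 * Off"
      by (simp only: sum.distrib sum_distrib_left[symmetric] Off_def) (simp add: sum_distrib_left)
    finally show ?thesis .
  qed
  have G0sum: "(\<Sum>s\<in>UNIV. (\<lambda>(w, Lt). frob A Lt) (DP0 u L mu (spec (\<lambda>i. 1 / mu i) u) s)) = NN TYPE('n) * (2 * Off)"
  proof -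
    define X where "X = (\<lambda>s. \<Sum>k\<in>UNIV. \<Sum>l\<in>UNIV. sg s k * sg s l * Qm A k l)"
    define F where "F = (\<Sum>k\<in>UNIV. Qm A k k)"
    have "(\<Sum>s\<in>UNIV. (\<lambda>(w, Lt). frob A Lt) (DP0 u L mu (spec (\<lambda>i. 1 / mu i) u) s)) =
          (\<Sum>s\<in>UNIV. X s * ell s - F * ell s)"
      by (intro sum.cong refl) (simp add: G0val[OF Asym] ell_def X_def F_def algebra_simps)
    also have "\<dots> = (\<Sum>s\<in>UNIV. X s * ell s) - F * (\<Sum>s\<in>UNIV. ell s)"
      by (simp only: sum_subtractf sum_distrib_left)
    also have "(\<Sum>s\<in>UNIV. X s * ell s) = NN TYPE('n) * (S * F + 2 * Off)"
      using s1 s3 unfolding X_def F_def by simp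
    finally show ?thesis unfolding s2 by (simp add: algebra_simps)
  qed
  have G1sum: "(\<Sum>I\<in>UNIV. mu I * (\<lambda>(w, Lt). frob A Lt) (DP1 u L (spec qq u) I)) = 2 * (\<Sum>k\<in>UNIV. Ac k k * Lc k k)"
  proof -
    have "mu I * (\<lambda>(w, Lt). frob A Lt) (DP1 u L (spec qq u) I) = 2 * (Ac I I * Lc I I)" for I
      using mpos[of I] by (simp only: G1val) (simp add: Ac_def Lc_def field_simps)
    thus ?thesis by (simp add: sum_distrib_left)
  qed
  have tot: "(\<Sum>k\<in>UNIV. Ac k k * Lc k k) + Off = frob A L"
  proof -
    have "frob A L = (\<Sum>k\<in>UNIV. \<Sum>l\<in>UNIV. Ac k l * Lc k l)"
      by (simp add: frob_ortho[OF o] Ac_def Lc_def)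
    also have "\<dots> = (\<Sum>k\<in>UNIV. \<Sum>l\<in>UNIV. (if k = l then Ac k l * Lc k l else 0) + (if k = l then 0 else Ac k l * Lc k l))"
      by (intro sum.cong refl) simp
    also have "\<dots> = (\<Sum>k\<in>UNIV. Ac k k * Lc k k) + Off"
      by (simp add: sum.distrib Off_def)
    finally show ?thesis by simp
  qed
  show ?thesis
    using NNpos by (simp add: G_dense[OF mnn msum] G1sum G0sum tot[symmetric]) (simp add: NN_def)
qed

end


lemma exp_affine:
  assumes "finite (set_pmf p)"
  shows "measure_pmf.expectation p (\<lambda>x. a * f x + b) = a * measure_pmf.expectation p f + (b::real)"
proof -
  have s1: "(\<Sum>x\<in>set_pmf p. pmf p x) = 1" by (rule sum_pmf_eq_1[OF assms]) auto
  have "measure_pmf.expectation p (\<lambda>x. a * f x + b) = (\<Sum>x\<in>set_pmf p. (a * f x + b) * pmf p x)"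
    by (rule exp_finite[OF assms])
  also have "\<dots> = a * (\<Sum>x\<in>set_pmf p. f x * pmf p x) + b * (\<Sum>x\<in>set_pmf p. pmf p x)"
    by (simp add: algebra_simps sum.distrib sum_distrib_left)
  also have "\<dots> = a * measure_pmf.expectation p f + b"
    by (simp add: exp_finite[OF assms, symmetric] s1)
  finally show ?thesis .
qed

lemma quad_bound:
  assumes "symmetric_mat L" "spec_norm L \<le> 1"
  shows "\<bar>x \<bullet> (L *v x)\<bar> \<le> norm x * norm x"
proof -
  have "\<bar>x \<bullet> (L *v x)\<bar> \<le> norm x * norm (L *v x)" by (rule Cauchy_Schwarz_ineq2)
  also have "norm (L *v x) \<le> onorm (\<lambda>x. L *v x) * norm x"
    by (rule onorm) (rule matrix_vector_mul_bounded_linear)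
  also have "\<dots> \<le> 1 * norm x" using assms(2) unfolding spec_norm_def by (intro mult_right_mono) auto
  finally show ?thesis by (simp add: mult_left_mono)
qed

lemma tr_diff: "transpose ((A::real^'n::finite^'n) - B) = transpose A - transpose B"
  by (simp add: vec_eq_iff transpose_def)
lemma tr_add: "transpose ((A::real^'n::finite^'n) + B) = transpose A + transpose B"
  by (simp add: vec_eq_iff transpose_def)
lemma tr_scale: "transpose (c *\<^sub>R (A::real^'n::finite^'n)) = c *\<^sub>R transpose A"
  by (simp add: vec_eq_iff transpose_def)
lemma tr_mat1: "transpose (mat 1 :: real^'n::finite^'n) = mat 1"
  by (simp add: vec_eq_iff transpose_def mat_def)

lemma abs_div_le1: "\<bar>x\<bar> \<le> (d::real) \<Longrightarrow> 0 < d \<Longrightarrow> \<bar>x / d\<bar> \<le> 1"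
  by (simp add: abs_divide divide_le_eq_1)

definition Ucomp :: "real \<Rightarrow> real^'n::finite \<Rightarrow> real^'n^'n" where
  "Ucomp T u = (1 - 1 / T) *\<^sub>R outer u u + (1 / (real CARD('n) * T)) *\<^sub>R mat 1"

lemma frob_mat1: "frob (mat 1) L = trace L"
  by (simp add: frob_def)

lemma round_bound:
  fixes eig :: "'n::finite eigfun" and W :: "real^'n^'n"
  assumes ev: "valid_eig eig" and W: "posdef W" and Wd: "density W"
    and mode: "(mode = Sparse \<and> 0 \<le> \<gamma> \<and> \<gamma> \<le> 1) \<or> (mode = Dense \<and> \<gamma> = 0)"
    and Ls: "symmetric_mat L" and Ln: "spec_norm L \<le> 1" and un: "norm u = 1" and T: "T \<ge> 1"
  shows "measure_pmf.expectation (samp mode \<gamma> eig W L) (\<lambda>(w, Lt). frob (outer w w - outer u u) L)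
    \<le> (1 - \<gamma>) * measure_pmf.expectation (samp mode \<gamma> eig W L) (\<lambda>(w, Lt). frob (W - Ucomp T u) Lt)
      + 2 * \<gamma> + 2 / T"
proof -
  let ?m = "fst (eig W)" and ?v = "snd (eig W)"
  have dec: "ortho ?v \<and> (\<forall>i. ?m i > 0) \<and> W = spec ?m ?v" by (rule posdef_decomp[OF ev W])
  hence o: "ortho ?v" and mpos: "\<And>i. ?m i > 0" and Ws: "W = spec ?m ?v" by auto
  have "trace W = trace (spec ?m ?v)" using Ws by (rule arg_cong)
  hence msum: "(\<Sum>i\<in>UNIV. ?m i) = 1" using Wd trace_spec[OF o, of ?m] by (simp add: density_def)
  have g: "0 \<le> \<gamma>" "\<gamma> \<le> 1" using mode by auto
  define d where "d = real CARD('n)"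
  have dpos: "d > 0" by (simp add: d_def)
  define lam where "lam = (\<lambda>i. (1 - \<gamma>) * ?m i + \<gamma> / real CARD('n))"
  have lpos: "\<And>i. lam i > 0"
  proof -
    fix i
    show "lam i > 0"
    proof (cases "\<gamma> = 1")
      case True thus ?thesis by (simp add: lam_def)
    next
      case False
      hence "(1 - \<gamma>) * ?m i > 0" using g mpos[of i] by simp
      moreover have "\<gamma> / real CARD('n) \<ge> 0" using g by simp
      ultimately show ?thesis by (simp add: lam_def)
    qed
  qed
  have lsum: "(\<Sum>i\<in>UNIV. lam i) = 1"
    by (simp add: lam_def sum.distrib sum_distrib_left[symmetric] msum)
  have Lt: "transpose L = L" using Ls by (simp add: symmetric_mat_def)
  define Lc where "Lc = (\<lambda>i. ?v i \<bullet> (L *v ?v i))"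
  define U where "U = Ucomp T u"
  have Ut: "transpose (W - U) = W - U"
    using W by (simp add: U_def Ucomp_def symm_posdef transpose_outer tr_diff tr_add tr_scale tr_mat1)
  have fin: "finite (set_pmf (samp mode \<gamma> eig W L))" by (rule finite_samp)
  have E1: "measure_pmf.expectation (samp mode \<gamma> eig W L) (\<lambda>(w, Lt). w \<bullet> (L *v w)) = (\<Sum>i\<in>UNIV. lam i * Lc i)"
  proof (cases mode)
    case Sparse
    show ?thesis unfolding Sparse samp_sparse_eq lam_def[symmetric] Lc_def
      by (rule sparse1[OF o Lt lpos lsum])
  next
    case Dense
    hence g0: "\<gamma> = 0" using mode by auto
    have lm: "lam = ?m" by (simp add: lam_def g0)
    show ?thesis unfolding Dense samp_dense_eq lam_def[symmetric] Lc_def lm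
      by (rule dense1[OF o Lt mpos msum])
  qed
  have E2: "measure_pmf.expectation (samp mode \<gamma> eig W L) (\<lambda>(w, Lt). frob (W - U) Lt) = frob (W - U) L"
  proof (cases mode)
    case Sparse
    show ?thesis unfolding Sparse samp_sparse_eq lam_def[symmetric]
      by (rule sparse2[OF o Lt lpos lsum Ut])
  next
    case Dense
    hence g0: "\<gamma> = 0" using mode by auto
    have lm: "lam = ?m" by (simp add: lam_def g0)
    have R: "inv_sqrt eig W = spec (qq ?m) ?v"
      using qq_def[OF o Lt mpos msum] by (simp add: inv_sqrt_def spec_def)
    have mne: "\<And>i. ?m i \<noteq> 0" using mpos by (metis less_irrefl)
    have "matrix_inv W = matrix_inv (spec ?m ?v)" using Ws by (rule arg_cong)
    also have "\<dots> = spec (\<lambda>i. 1 / ?m i) ?v" by (rule spec_inv[OF o]) (rule mne)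
    finally have Wi: "matrix_inv W = spec (\<lambda>i. 1 / ?m i) ?v" .
    show ?thesis unfolding Dense samp_dense_eq lam_def[symmetric] lm R Wi
      by (rule dense2[OF o Lt mpos msum Ut])
  qed
  have LHS: "measure_pmf.expectation (samp mode \<gamma> eig W L) (\<lambda>(w, Lt). frob (outer w w - outer u u) L) =
        (\<Sum>i\<in>UNIV. lam i * Lc i) - u \<bullet> (L *v u)"
  proof -
    have "measure_pmf.expectation (samp mode \<gamma> eig W L) (\<lambda>(w, Lt). frob (outer w w - outer u u) L) =
          measure_pmf.expectation (samp mode \<gamma> eig W L) (\<lambda>x. 1 * (\<lambda>(w, Lt). w \<bullet> (L *v w)) x + (- (u \<bullet> (L *v u))))"
      by (simp add: frob_diff_left frob_outer_left case_prod_unfold)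
    also have "\<dots> = (\<Sum>i\<in>UNIV. lam i * Lc i) - u \<bullet> (L *v u)"
      by (simp only: exp_affine[OF fin] E1)
    finally show ?thesis .
  qed
  have fW: "frob W L = (\<Sum>i\<in>UNIV. ?m i * Lc i)"
  proof -
    have "frob W L = (\<Sum>i\<in>UNIV. \<Sum>j\<in>UNIV. (if i = j then ?m j else 0) * (?v i \<bullet> (L *v ?v j)))"
      by (subst (1) Ws) (simp add: frob_ortho[OF o] spec_inner[OF o])
    thus ?thesis by (simp add: Lc_def if_distrib if_distribR cong: if_cong)
  qed
  have trL: "trace L = (\<Sum>i\<in>UNIV. Lc i)" by (simp add: trace_ortho[OF o] Lc_def)
  have lamLc: "(\<Sum>i\<in>UNIV. lam i * Lc i) = (1 - \<gamma>) * frob W L + \<gamma> * (trace L / d)"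
  proof -
    have "(\<Sum>i\<in>UNIV. lam i * Lc i) = (\<Sum>i\<in>UNIV. (1 - \<gamma>) * (?m i * Lc i) + (\<gamma> / d) * Lc i)"
      by (intro sum.cong refl) (simp add: lam_def d_def algebra_simps)
    also have "\<dots> = (1 - \<gamma>) * (\<Sum>i\<in>UNIV. ?m i * Lc i) + (\<gamma> / d) * (\<Sum>i\<in>UNIV. Lc i)"
      by (simp only: sum.distrib sum_distrib_left)
    finally show ?thesis by (simp add: fW trL)
  qed
  have fU: "frob U L = (1 - 1/T) * (u \<bullet> (L *v u)) + (1 / T) * (trace L / d)"
    by (simp add: U_def Ucomp_def frob_add_left frob_scale_left frob_outer_left frob_mat1 d_def)
  have bu: "\<bar>u \<bullet> (L *v u)\<bar> \<le> 1" using quad_bound[OF Ls Ln, of u] un by simp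
  have bL: "\<bar>trace L / d\<bar> \<le> 1"
  proof -
    have "\<bar>Lc i\<bar> \<le> 1" for i
    proof -
      have "?v i \<bullet> ?v i = 1" using o by (simp add: ortho_def)
      hence "norm (?v i) = 1" by (simp add: norm_eq_sqrt_inner)
      thus ?thesis using quad_bound[OF Ls Ln, of "?v i"] by (simp add: Lc_def)
    qed
    hence b1: "\<And>i. \<bar>Lc i\<bar> \<le> 1" by blast
    have "\<bar>trace L\<bar> \<le> (\<Sum>i\<in>UNIV. \<bar>Lc i\<bar>)" unfolding trL by (rule sum_abs)
    also have "\<dots> \<le> (\<Sum>i\<in>(UNIV::'n set). 1)" by (rule sum_mono) (rule b1)
    finally have "\<bar>trace L\<bar> \<le> (\<Sum>i\<in>(UNIV::'n set). 1)" .
    moreover have "(\<Sum>i\<in>(UNIV::'n set). (1::real)) = d" by (simp add: d_def)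
    ultimately have tl: "\<bar>trace L\<bar> \<le> d" by linarith
    show ?thesis by (rule abs_div_le1[OF tl dpos])
  qed
  define a where "a = trace L / d"
  define b where "b = u \<bullet> (L *v u)"
  define c where "c = \<gamma> + (1 - \<gamma>) / T"
  have c0: "0 \<le> c" using g T by (simp add: c_def)
  have key: "(1 - \<gamma>) * frob W L + \<gamma> * a - b = (1 - \<gamma>) * (frob W L - frob U L) + c * (a - b)"
    using T by (simp add: fU a_def b_def c_def algebra_simps diff_divide_distrib add_divide_distrib)
  have a1: "a \<le> 1" unfolding a_def by (rule abs_le_D1[OF bL])
  have b1: "- b \<le> 1" unfolding b_def by (rule abs_le_D2[OF bu])
  have ab: "a - b \<le> 2" using a1 b1 by linarith
  have "c * (a - b) \<le> c * 2" by (rule mult_left_mono[OF ab c0])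
  also have "c * 2 \<le> 2 * \<gamma> + 2 / T" using g T by (simp add: c_def field_simps)
  finally have cb: "c * (a - b) \<le> 2 * \<gamma> + 2 / T" .
  show ?thesis unfolding U_def[symmetric] LHS E2 lamLc
    using key cb by (simp add: frob_diff_left a_def b_def)
qed


lemma exp_mono:
  assumes "finite (set_pmf p)" "\<And>x. x \<in> set_pmf p \<Longrightarrow> f x \<le> (g x::real)"
  shows "measure_pmf.expectation p f \<le> measure_pmf.expectation p g"
  unfolding exp_finite[OF assms(1)]
  by (rule sum_mono) (use assms(2) in \<open>auto intro: mult_right_mono\<close>)

lemma exp_sum:
  assumes "finite (set_pmf p)"
  shows "measure_pmf.expectation p (\<lambda>x. \<Sum>t\<in>S. f t x) = (\<Sum>t\<in>S. measure_pmf.expectation p (f t) :: real)"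
  unfolding exp_finite[OF assms(1)]
  by (simp add: sum_distrib_right) (rule sum.swap)

lemma Ucomp_props:
  fixes u :: "real^'n::finite"
  assumes un: "norm u = 1" and T: "T \<ge> 1"
  shows "posdef (Ucomp T u) \<and> density (Ucomp T u)"
proof -
  define d where "d = real CARD('n)"
  have dpos: "d > 0" by (simp add: d_def)
  have sym: "symmetric_mat (Ucomp T u)"
    by (simp add: symmetric_mat_def Ucomp_def tr_add tr_scale transpose_outer tr_mat1)
  have q: "x \<bullet> (Ucomp T u *v x) = (1 - 1/T) * (u \<bullet> x)^2 + (1 / (d * T)) * (x \<bullet> x)" for x
    by (simp add: Ucomp_def matrix_vector_mult_add_rdistrib mv_scale_left outer_mv inner_add_right
        power2_eq_square d_def inner_commute)
  have pd: "posdef (Ucomp T u)"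
    unfolding posdef_def
  proof (intro conjI sym allI impI)
    fix x :: "real^'n" assume "x \<noteq> 0"
    hence "x \<bullet> x > 0" by simp
    hence "(1 / (d * T)) * (x \<bullet> x) > 0" using dpos T by simp
    moreover have "(1 - 1/T) * (u \<bullet> x)^2 \<ge> 0" using T by (intro mult_nonneg_nonneg) (simp_all add: field_simps)
    ultimately show "x \<bullet> (Ucomp T u *v x) > 0" unfolding q by linarith
  qed
  have tr: "trace (Ucomp T u) = 1"
  proof -
    have "u \<bullet> u = 1" using un by (simp add: norm_eq_sqrt_inner)
    hence "trace (Ucomp T u) = (1 - 1/T) + (1 / (d * T)) * d"
      by (simp add: Ucomp_def trace_add trace_scale trace_outer trace_I d_def)
    thus ?thesis using dpos T by (simp add: field_simps)
  qed
  show ?thesis using pd tr posdef_psd by (simp add: density_def)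
qed

lemma W1_inv: "matrix_inv (W1 :: real^'n::finite^'n) = real CARD('n) *\<^sub>R mat 1"
  by (rule inv_unique) (simp add: W1_def mm_scale_left matrix_scalar_ac)

lemma det_W1: "det (W1 :: real^'n::finite^'n) = (1 / real CARD('n)) ^ CARD('n)"
  by (subst det_diagonal) (auto simp: W1_def mat_def)

lemma D_U_W1:
  fixes eig :: "'n::finite eigfun" and u :: "real^'n"
  assumes ev: "valid_eig eig" and un: "norm u = 1" and T: "T \<ge> 1"
  shows "logdet_div (Ucomp T u) W1 \<le> real CARD('n) * ln T"
proof -
  define d where "d = real CARD('n)"
  have dpos: "d > 0" by (simp add: d_def)
  define U where "U = Ucomp T u"
  have Up: "posdef U \<and> density U" unfolding U_def by (rule Ucomp_props[OF un T])
  have W1p: "posdef (W1 :: real^'n^'n) \<and> density (W1 :: real^'n^'n)" by (rule W1_props)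
  obtain nu z where oz: "ortho z" and nu: "\<And>i. nu i > 0" and Us: "U = spec nu z"
    using posdef_ex[OF ev] Up by blast
  have nub: "nu i \<ge> 1 / (d * T)" for i
  proof -
    have "nu i = z i \<bullet> (U *v z i)" by (simp add: Us spec_inner[OF oz])
    also have "\<dots> = (1 - 1/T) * (u \<bullet> z i)^2 + (1 / (d * T)) * (z i \<bullet> z i)"
      by (simp add: U_def Ucomp_def matrix_vector_mult_add_rdistrib mv_scale_left outer_mv inner_add_right
          power2_eq_square d_def inner_commute)
    also have "z i \<bullet> z i = 1" using oz by (simp add: ortho_def)
    finally have e: "nu i = (1 - 1/T) * (u \<bullet> z i)^2 + 1 / (d * T)" by simp
    have "(1 - 1/T) * (u \<bullet> z i)^2 \<ge> 0" using T by (intro mult_nonneg_nonneg) (simp_all add: field_simps)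
    thus ?thesis using e by linarith
  qed
  have cpos: "1 / (d * T) > 0" using dpos T by simp
  have detU: "det U \<ge> (1 / (d * T)) ^ CARD('n)"
  proof -
    have "(1 / (d * T)) ^ CARD('n) = (\<Prod>i\<in>(UNIV::'n set). 1 / (d * T))" by simp
    also have "\<dots> \<le> (\<Prod>i\<in>UNIV. nu i)" by (rule prod_mono) (use nub cpos in \<open>auto intro: less_imp_le\<close>)
    also have "\<dots> = det U" by (simp add: Us det_spec[OF oz])
    finally show ?thesis .
  qed
  have lndU: "ln (det U) \<ge> d * (- ln d - ln T)"
  proof -
    have "ln ((1 / (d * T)) ^ CARD('n)) \<le> ln (det U)"
      using detU cpos by (intro ln_mono) auto
    moreover have "ln ((1 / (d * T)) ^ CARD('n)) = d * (- ln d - ln T)"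
      using dpos T by (simp add: ln_realpow ln_div ln_mult d_def)
    ultimately show ?thesis by simp
  qed
  have lndW: "ln (det (W1 :: real^'n^'n)) = - d * ln d"
    using dpos by (simp add: det_W1 ln_realpow ln_div d_def)
  have trU: "trace (matrix_inv W1 ** U) = d"
    using Up by (simp add: W1_inv mm_scale_left trace_scale density_def d_def)
  have "logdet_div U W1 = trace (matrix_inv W1 ** U) - ln (det U) + ln (det (W1 :: real^'n^'n)) - d"
    using D_alt[OF ev _ _] Up W1p by (simp add: d_def)
  also have "\<dots> \<le> d * ln T" using trU lndU lndW by (simp add: algebra_simps)
  finally show ?thesis by (simp add: U_def d_def)
qed


lemma pathwise:
  fixes eig :: "'n::finite eigfun"
  assumes ev: "valid_eig eig" and eta: "\<eta> > 0"
    and pd: "\<forall>h\<in>set_pmf (traj mode \<gamma> \<eta> eig env T). \<forall>t<T. posdef (matrix_inv (Wt \<eta> h t) + \<eta> *\<^sub>R Lth h t)"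
    and h: "h \<in> set_pmf (traj mode \<gamma> \<eta> eig env T)"
    and U: "posdef U" "density U"
  shows "(\<Sum>t<T. frob (Wt \<eta> h t - U) (Lth h t)) \<le> logdet_div U W1 / \<eta> +
           (\<Sum>t<T. frob (Wt \<eta> h t - Wtil \<eta> (Wt \<eta> h t) (Lth h t)) (Lth h t))"
proof -
  have len: "length h = T" using h by (rule traj_len)
  have inv: "\<And>t. t \<le> T \<Longrightarrow> posdef (Wt \<eta> h t) \<and> density (Wt \<eta> h t)"
    by (rule invariant[OF ev pd h])
  define D where "D = (\<lambda>t. logdet_div U (Wt \<eta> h t))"
  define X where "X = (\<lambda>t. frob (Wt \<eta> h t - U) (Lth h t))"
  define Z where "Z = (\<lambda>t. frob (Wt \<eta> h t - Wtil \<eta> (Wt \<eta> h t) (Lth h t)) (Lth h t))"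
  have step: "\<eta> * X t \<le> (D t - D (Suc t)) + \<eta> * Z t" if "t < T" for t
  proof -
    have Wp: "posdef (Wt \<eta> h t)" using inv[of t] that by simp
    have A: "posdef (matrix_inv (Wt \<eta> h t) + \<eta> *\<^sub>R Lth h t)" using pd h that by simp
    have "Wt \<eta> h (Suc t) = proj (Wtil \<eta> (Wt \<eta> h t) (Lth h t))" using Wt_Suc[of t h \<eta>] len that by simp
    thus ?thesis using omd_step[OF ev Wp A U] by (simp add: D_def X_def Z_def)
  qed
  have "\<eta> * (\<Sum>t<T. X t) = (\<Sum>t<T. \<eta> * X t)" by (simp add: sum_distrib_left)
  also have "\<dots> \<le> (\<Sum>t<T. (D t - D (Suc t)) + \<eta> * Z t)" by (rule sum_mono) (simp add: step)
  also have "\<dots> = (D 0 - D T) + \<eta> * (\<Sum>t<T. Z t)"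
    by (simp add: sum.distrib sum_lessThan_telescope' sum_distrib_left)
  finally have main: "\<eta> * (\<Sum>t<T. X t) \<le> (D 0 - D T) + \<eta> * (\<Sum>t<T. Z t)" .
  have DT: "D T \<ge> 0" using D_core[OF ev U(1), of "Wt \<eta> h T"] inv[of T] by (simp add: D_def)
  have D0: "D 0 = logdet_div U W1" by (simp add: D_def Wt_def)
  have "\<eta> * (\<Sum>t<T. X t) \<le> \<eta> * (logdet_div U W1 / \<eta> + (\<Sum>t<T. Z t))"
    using main DT D0 eta by (simp add: algebra_simps)
  hence "(\<Sum>t<T. X t) \<le> logdet_div U W1 / \<eta> + (\<Sum>t<T. Z t)"
    using eta by (simp only: mult_le_cancel_left_pos)
  thus ?thesis by (simp add: X_def Z_def)
qed

lemma set_traj_take: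
  assumes "t \<le> T" "h' \<in> set_pmf (traj mode \<gamma> \<eta> eig env t)"
  shows "\<exists>h\<in>set_pmf (traj mode \<gamma> \<eta> eig env T). h' = take t h"
proof -
  have "h' \<in> set_pmf (map_pmf (take t) (traj mode \<gamma> \<eta> eig env T))" using assms traj_take by metis
  thus ?thesis by auto
qed

theorem lemma3:
  fixes mode :: sampling and \<gamma> \<eta> :: real and T :: nat
    and eig :: "'n::finite eigfun" and env :: "'n hist \<Rightarrow> 'n rmat"
  assumes "CARD('n) \<ge> 2" and "T \<ge> 2" and "\<eta> > 0"
    and "(mode = Sparse \<and> 0 \<le> \<gamma> \<and> \<gamma> \<le> 1) \<or> (mode = Dense \<and> \<gamma> = 0)"
    and "valid_eig eig"
    and "\<forall>h. symmetric_mat (env h) \<and> spec_norm (env h) \<le> 1"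
    and "\<forall>h\<in>set_pmf (traj mode \<gamma> \<eta> eig env T). \<forall>t<T.
           posdef (matrix_inv (Wt \<eta> h t) + \<eta> *\<^sub>R Lth h t)"
  shows "regret mode \<gamma> \<eta> eig env T \<le>
           real CARD('n) * ln (real T) / \<eta> + 2 * \<gamma> * real T + 2
           + (1 - \<gamma>) * (\<Sum>t<T. measure_pmf.expectation (traj mode \<gamma> \<eta> eig env T)
                 (\<lambda>h. frob (Wt \<eta> h t - Wtil \<eta> (Wt \<eta> h t) (Lth h t)) (Lth h t)))"
proof -
  note T2 = assms(2) and eta = assms(3) and mode = assms(4) and ev = assms(5) and envp = assms(6)
    and pd = assms(7)
  have g: "0 \<le> \<gamma>" "\<gamma> \<le> 1" using mode by auto
  have T1: "real T \<ge> 1" using T2 by simp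
  let ?P = "traj mode \<gamma> \<eta> eig env T"
  define Z :: "nat \<Rightarrow> 'n hist \<Rightarrow> real" where "Z = (\<lambda>t h. frob (Wt \<eta> h t - Wtil \<eta> (Wt \<eta> h t) (Lth h t)) (Lth h t))"
  define RHS where "RHS = real CARD('n) * ln (real T) / \<eta> + 2 * \<gamma> * real T + 2
           + (1 - \<gamma>) * (\<Sum>t<T. measure_pmf.expectation ?P (Z t))"
  have finP: "finite (set_pmf ?P)" by (rule finite_traj)
  have bound: "(\<Sum>t<T. measure_pmf.expectation ?P (\<lambda>h. frob (outer (wh h t) (wh h t) - outer u u) (Lh h t))) \<le> RHS"
    if un: "norm u = 1" for u :: "real^'n"
  proof -
    define U where "U = Ucomp (real T) u"
    have Up: "posdef U \<and> density U" unfolding U_def by (rule Ucomp_props[OF un T1])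
    define X :: "nat \<Rightarrow> 'n hist \<Rightarrow> real" where "X = (\<lambda>t h. frob (outer (wh h t) (wh h t) - outer u u) (Lh h t))"
    define Y :: "nat \<Rightarrow> 'n hist \<Rightarrow> real" where "Y = (\<lambda>t h. frob (Wt \<eta> h t - U) (Lth h t))"
    define c where "c = 2 * \<gamma> + 2 / real T"
    have step1: "measure_pmf.expectation ?P (X t) \<le> (1 - \<gamma>) * measure_pmf.expectation ?P (Y t) + c"
      if t: "t < T" for t
    proof -
      let ?Q = "traj mode \<gamma> \<eta> eig env t"
      let ?S = "\<lambda>h. samp mode \<gamma> eig (Wfrom \<eta> W1 h) (env h)"
      have eX: "measure_pmf.expectation ?P (X t) =
          measure_pmf.expectation ?Q (\<lambda>h. measure_pmf.expectation (?S h)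
             (\<lambda>(w, Lt). frob (outer w w - outer u u) (env h)))"
        unfolding X_def using round_exp[OF t, of mode \<gamma> \<eta> eig env "\<lambda>h' L w Lt. frob (outer w w - outer u u) L"]
        by simp
      have eY: "measure_pmf.expectation ?P (Y t) =
          measure_pmf.expectation ?Q (\<lambda>h. measure_pmf.expectation (?S h)
             (\<lambda>(w, Lt). frob (Wfrom \<eta> W1 h - U) Lt))"
        unfolding Y_def Wt_def using round_exp[OF t, of mode \<gamma> \<eta> eig env "\<lambda>h' L w Lt. frob (Wfrom \<eta> W1 h' - U) Lt"]
        by simp
      have finQ: "finite (set_pmf ?Q)" by (rule finite_traj)
      have "measure_pmf.expectation ?Q (\<lambda>h. measure_pmf.expectation (?S h)
             (\<lambda>(w, Lt). frob (outer w w - outer u u) (env h))) \<le>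
            measure_pmf.expectation ?Q (\<lambda>h. (1 - \<gamma>) * measure_pmf.expectation (?S h)
             (\<lambda>(w, Lt). frob (Wfrom \<eta> W1 h - U) Lt) + c)"
      proof (rule exp_mono[OF finQ])
        fix h' assume h': "h' \<in> set_pmf ?Q"
        obtain h where h: "h \<in> set_pmf ?P" and hh: "h' = take t h"
          using set_traj_take[OF less_imp_le[OF t] h'] by blast
        have "posdef (Wt \<eta> h t) \<and> density (Wt \<eta> h t)" using invariant[OF ev pd h] t by simp
        hence Wp: "posdef (Wfrom \<eta> W1 h') \<and> density (Wfrom \<eta> W1 h')" by (simp add: Wt_def hh)
        show "measure_pmf.expectation (?S h') (\<lambda>(w, Lt). frob (outer w w - outer u u) (env h')) \<le>
            (1 - \<gamma>) * measure_pmf.expectation (?S h') (\<lambda>(w, Lt). frob (Wfrom \<eta> W1 h' - U) Lt) + c"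
          using round_bound[OF ev conjunct1[OF Wp] conjunct2[OF Wp] mode, of "env h'" u "real T"] envp un T1
          by (simp add: U_def c_def)
      qed
      also have "\<dots> = (1 - \<gamma>) * measure_pmf.expectation ?Q (\<lambda>h. measure_pmf.expectation (?S h)
             (\<lambda>(w, Lt). frob (Wfrom \<eta> W1 h - U) Lt)) + c"
        by (rule exp_affine[OF finQ])
      finally show ?thesis unfolding eX eY .
    qed
    have step2: "(\<Sum>t<T. measure_pmf.expectation ?P (X t)) \<le> (1 - \<gamma>) * (\<Sum>t<T. measure_pmf.expectation ?P (Y t)) + real T * c"
    proof -
      have "(\<Sum>t<T. measure_pmf.expectation ?P (X t)) \<le> (\<Sum>t<T. (1 - \<gamma>) * measure_pmf.expectation ?P (Y t) + c)"
        by (rule sum_mono) (simp add: step1)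
      thus ?thesis by (simp add: sum.distrib sum_distrib_left)
    qed
    define D0 where "D0 = logdet_div U W1"
    have D0n: "D0 \<ge> 0" unfolding D0_def using D_core[OF ev _ conjunct1[OF W1_props]] Up by blast
    have D0b: "D0 \<le> real CARD('n) * ln (real T)" unfolding D0_def U_def by (rule D_U_W1[OF ev un T1])
    have step3: "(\<Sum>t<T. measure_pmf.expectation ?P (Y t)) \<le> D0 / \<eta> + (\<Sum>t<T. measure_pmf.expectation ?P (Z t))"
    proof -
      have "(\<Sum>t<T. measure_pmf.expectation ?P (Y t)) = measure_pmf.expectation ?P (\<lambda>h. \<Sum>t<T. Y t h)"
        by (rule exp_sum[OF finP, symmetric])
      also have "\<dots> \<le> measure_pmf.expectation ?P (\<lambda>h. 1 * (\<Sum>t<T. Z t h) + D0 / \<eta>)"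
      proof (rule exp_mono[OF finP])
        fix h assume h: "h \<in> set_pmf ?P"
        show "(\<Sum>t<T. Y t h) \<le> 1 * (\<Sum>t<T. Z t h) + D0 / \<eta>"
          using pathwise[OF ev eta pd h conjunct1[OF Up] conjunct2[OF Up]] by (simp add: Y_def Z_def D0_def)
      qed
      also have "\<dots> = (\<Sum>t<T. measure_pmf.expectation ?P (Z t)) + D0 / \<eta>"
        by (simp only: exp_affine[OF finP] exp_sum[OF finP])
      finally show ?thesis by simp
    qed
    have Tc: "real T * c = 2 * \<gamma> * real T + 2" using T1 by (simp add: c_def field_simps)
    have "(1 - \<gamma>) * (D0 / \<eta>) \<le> D0 / \<eta>"
      by (rule mult_left_le_one_le) (use g D0n eta in auto)
    also have "D0 / \<eta> \<le> real CARD('n) * ln (real T) / \<eta>"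
      using D0b eta by (simp add: divide_right_mono)
    finally have dterm: "(1 - \<gamma>) * (D0 / \<eta>) \<le> real CARD('n) * ln (real T) / \<eta>" .
    have "(\<Sum>t<T. measure_pmf.expectation ?P (X t)) \<le> (1 - \<gamma>) * (D0 / \<eta> + (\<Sum>t<T. measure_pmf.expectation ?P (Z t))) + real T * c"
      using step2 step3 g by (smt (verit) mult_left_mono)
    also have "\<dots> \<le> RHS" using dterm Tc by (simp add: RHS_def algebra_simps)
    finally show ?thesis unfolding X_def .
  qed
  have ne: "{u::real^'n. norm u = 1} \<noteq> {}"
  proof -
    have "norm (axis (undefined::'n) (1::real)) = 1" by (rule norm_axis_1)
    thus ?thesis by blast
  qed
  have "regret mode \<gamma> \<eta> eig env T \<le> RHS"
    unfolding regret_def by (rule cSUP_least[OF ne]) (use bound in auto)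
  thus ?thesis by (simp add: RHS_def Z_def)
qed


end
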